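(* Consider adversarial training. On the event $\mathcal E$, fix an iteration $t\le T$ and suppose that the noise-stability bound $|\langle\mathbf w^{(\tau)}_r,\mathbf x_{i,j}\rangle|\le3\sigma_0\sigma_n\sqrt{d\log(16NmP/\delta)}+\dfrac{21p_{\mathrm{un}}NP\log^{1/3}T}{\sqrt d}\sqrt{\log(16N^2P^2/\delta)}$ holds for all $r\in[m]$, $i\in\mathcal S_L$, $j\ne s(\mathbf X_i)$ and all iterations $\tau\le t$. Then for all filters $r\in[m]$, $w^{(t)}_{r,1}\le\dfrac{3\log^{1/3}T}{\alpha}$.
   Context: Data. Fix integers $N,P,d,m$ and reals $\alpha,\sigma_n,\sigma_0,\eta,\epsilon,\Gamma>0$, $\delta\in(0,1)$, and a horizon $T\in\mathbb N$. Let $\mathbf u=\mathbf e_1$, $\mathbf v=\mathbf e_d$ and $\Pi_{\mathcal F}$ the orthogonal projection onto $\mathrm{span}\{\mathbf u,\mathbf v\}$. Fix a partition $[N]=\mathcal S_L\sqcup\mathcal S_U$, $p_{\mathrm{un}}=|\mathcal S_U|/N$. Independently for each $i$: $y_i$ uniform on $\{\pm1\}$, $s(\mathbf X_i)$ uniform on $[P]$, $\mathbf x_{i,s(\mathbf X_i)}=\alpha y_i\mathbf u$ if $i\in\mathcal S_L$ and $\alpha y_i\mathbf v$ if $i\in\mathcal S_U$, noise patches $\mathbf x_{i,p}\sim\mathcal N(\mathbf 0,\sigma_n^2(\mathbf I_d-\Pi_{\mathcal F}))$ for $p\ne s(\mathbf X_i)$, independent. Student $f_{\mathbf W}(\mathbf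 X)=\sum_{r=1}^m\sum_{p=1}^P[\phi(\langle\mathbf w_r,\mathbf x_p\rangle)-\phi(-\langle\mathbf w_r,\mathbf x_p\rangle)]$, $\phi(z)=(\max\{0,z\})^3$; $w^{(0)}_{r,j}\sim\mathcal N(0,\sigma_0^2)$ i.i.d. for $j<d$, $w^{(0)}_{r,d}=0$, $w_{r,d}=0$ maintained; $w_{r,1}=\langle\mathbf w_r,\mathbf e_1\rangle$. $\ell(z)=\log(1+e^{-z})$. $\tilde{\mathbf X}^{(t)}_i$ maximizes $\ell(y_if_{\mathbf W^{(t)}}(\mathbf X'))$ over $\|\mathbf X'-\mathbf X_i\|_\infty\le\epsilon$, $\mathbf X'-\mathbf X_i\in\mathrm{span}(\mathbf x_{i,s(\mathbf X_i)})$. Adversarial training: $\mathbf W^{(t+1)}=\mathbf W^{(t)}-\frac\eta N\sum_i\nabla_{\mathbf W}\ell(y_if_{\mathbf W}(\tilde{\mathbf X}^{(t)}_i))|_{\mathbf W^{(t)}}$ with $\tilde{\mathbf X}^{(t)}_i$ fixed. Standing parameter conditions (for a sufficiently large universal constant $C>0$): (i) $T\ge CN/(\eta\sigma_0\sigma_n^3d^{3/2})$; (ii) $d\ge Cm^2P^2N^2\log^4(TNmP/\delta)$; (iii) $\alpha\ge C\sigma_n\sqrt d\log(TNmP/\delta)/(N^{1/3}(1-p_{\mathrm{un}})^{1/3})$; (iv) $\sigma_0\le C^{-1}\min\{\frac{1}{m^{2/3}P^{2/3}\sigma_n\sqrt d},\frac{1}{\alpha m^{2/3}},\frac{1}{\sigma_nm^2P^{1/2}d}\}/\log(TdNmP/\delta)$;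 (v) $\eta\le C^{-1}\min\{\frac1{\alpha^3\sigma_0},\frac1{\sigma_n^2d},\frac1{\alpha^2}\}/\log(TNmP/\delta)$; (vi) $C\sigma_nmP^{1/2}\log(TdNP/\delta)\le\epsilon<C^{-1}\min\{\alpha,\frac1{m\sigma_0d}\}$; (vii) either $p_{\mathrm{un}}=0$, or $C/N\le p_{\mathrm{un}}\le C^{-1}\log d/N$, and $N\ge CmP\log(TdNmP/\delta)$; (viii) $C\log(NP/\delta)\le m\le C\log^Cd$, $2\le P\le C$; (ix) $\Gamma\ge Cd$. Event $\mathcal E$: for all $r\in[m]$, $i,k\in[N]$, $j\ne s(\mathbf X_i)$, $q\ne s(\mathbf X_k)$, $(i,j)\ne(k,q)$: $\frac12\sigma_n^2d\le\|\mathbf x_{i,j}\|_2^2\le\frac32\sigma_n^2d$; $|\langle\mathbf x_{i,j},\mathbf x_{k,q}\rangle|\le2\sigma_n^2\sqrt{d\log(16N^2P^2/\delta)}$; $\|\mathbf x_{i,j}\|_\infty\le\sigma_n\sqrt{2\log(16dNP/\delta)}$; $\|\mathbf w_r^{(0)}\|_2\le2\sigma_0\sqrt d$; $|\langle\mathbf w^{(0)}_r,\mathbf e_1\rangle|\le\sigma_0\sqrt{2\log(16m/\delta)}$; $|\langle\mathbf w^{(0)}_r,\mathbf x_{i,j}\rangle|\le2\sigma_0\sigma_n\sqrt{d\log(16NmP/\delta)}$; $\frac12\sigma_0\le\max_r\langle\mathbf w^{(0)}_r,\mathbf e_1\rangle\le\sigma_0\sqrt{2\log(16m/\delta)}$;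 $\frac14\sigma_0\sigma_n\sqrt d\le\max_ry_i\langle\mathbf w^{(0)}_r,\mathbf x_{i,j}\rangle\le2\sigma_0\sigma_n\sqrt{d\log(16NmP/\delta)}$. *)

theory Defs
  imports "HOL-Analysis.Analysis"
begin

text \<open>Vectors in R^d are functions nat => real with coordinates 1..d.
  A data point X is a function p => j => real (patch p in 1..P, coordinate j in 1..d).
  Weights W r j: filter r in 1..m, coordinate j in 1..d.\<close>

definition ip :: "nat \<Rightarrow> (nat \<Rightarrow> real) \<Rightarrow> (nat \<Rightarrow> real) \<Rightarrow> real" where
  "ip d x y = (\<Sum>j=1..d. x j * y j)"

definition sqnorm :: "nat \<Rightarrow> (nat \<Rightarrow> real) \<Rightarrow> real" where
  "sqnorm d x = (\<Sum>j=1..d. (x j)^2)"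

definition infnorm_d :: "nat \<Rightarrow> (nat \<Rightarrow> real) \<Rightarrow> real" where
  "infnorm_d d x = Max ((\<lambda>j. \<bar>x j\<bar>) ` {1..d})"

definition evec :: "nat \<Rightarrow> nat \<Rightarrow> real" where
  "evec k = (\<lambda>j. if j = k then 1 else 0)"

definition phi :: "real \<Rightarrow> real" where
  "phi z = (max 0 z)^3"

definition fW :: "nat \<Rightarrow> nat \<Rightarrow> nat \<Rightarrow> (nat \<Rightarrow> nat \<Rightarrow> real) \<Rightarrow> (nat \<Rightarrow> nat \<Rightarrow> real) \<Rightarrow> real" where
  "fW m P d W X = (\<Sum>r=1..m. \<Sum>p=1..P. phi (ip d (W r) (X p)) - phi (- ip d (W r) (X p)))"

definition logloss :: "real \<Rightarrow> real" where
  "logloss z = ln (1 + exp (- z))"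

definition adv_feasible :: "nat \<Rightarrow> nat \<Rightarrow> real \<Rightarrow> (nat \<Rightarrow> nat \<Rightarrow> real) \<Rightarrow> nat \<Rightarrow> (nat \<Rightarrow> nat \<Rightarrow> real) \<Rightarrow> bool" where
  "adv_feasible P d eps Xi s X' \<longleftrightarrow>
     (\<exists>c::real. \<forall>p\<in>{1..P}. \<forall>j\<in>{1..d}. X' p j - Xi p j = (if p = s then c * Xi p j else 0)) \<and>
     (\<forall>p\<in>{1..P}. \<forall>j\<in>{1..d}. \<bar>X' p j - Xi p j\<bar> \<le> eps)"

definition is_adv :: "nat \<Rightarrow> nat \<Rightarrow> nat \<Rightarrow> real \<Rightarrow> (nat \<Rightarrow> nat \<Rightarrow> real) \<Rightarrow> real \<Rightarrow> (nat \<Rightarrow> nat \<Rightarrow> real) \<Rightarrow> nat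
    \<Rightarrow> (nat \<Rightarrow> nat \<Rightarrow> real) \<Rightarrow> bool" where
  "is_adv m P d eps W yi Xi s Xt \<longleftrightarrow> adv_feasible P d eps Xi s Xt \<and>
     (\<forall>X'. adv_feasible P d eps Xi s X' \<longrightarrow> logloss (yi * fW m P d W X') \<le> logloss (yi * fW m P d W Xt))"

text \<open>One adversarial-training GD step; the trainable coordinates are j = 1..d-1
  (coordinate d is kept at its initial value 0: "w_{r,d}=0 maintained").\<close>
definition train_step :: "nat \<Rightarrow> nat \<Rightarrow> nat \<Rightarrow> nat \<Rightarrow> real \<Rightarrow> (nat \<Rightarrow> real) \<Rightarrow> (nat \<Rightarrow> nat \<Rightarrow> nat \<Rightarrow> real)
    \<Rightarrow> (nat \<Rightarrow> nat \<Rightarrow> real) \<Rightarrow> (nat \<Rightarrow> nat \<Rightarrow> real)" where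
  "train_step N m P d eta y Xadv W = (\<lambda>r j.
     if 1 \<le> j \<and> j < d then
       W r j - eta / real N * (\<Sum>i=1..N.
          deriv (\<lambda>z. logloss (y i * fW m P d (W(r := (W r)(j := z))) (Xadv i))) (W r j))
     else W r j)"

definition data_support :: "nat \<Rightarrow> nat \<Rightarrow> nat \<Rightarrow> real \<Rightarrow> nat set \<Rightarrow> nat set \<Rightarrow> (nat \<Rightarrow> real) \<Rightarrow> (nat \<Rightarrow> nat)
    \<Rightarrow> (nat \<Rightarrow> nat \<Rightarrow> nat \<Rightarrow> real) \<Rightarrow> bool" where
  "data_support N P d alpha SL SU y s X \<longleftrightarrow>
     SL \<union> SU = {1..N} \<and> SL \<inter> SU = {} \<and>
     (\<forall>i\<in>{1..N}. (y i = 1 \<or> y i = -1) \<and> s i \<in> {1..P} \<and>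
        (\<forall>j\<in>{1..d}. X i (s i) j = alpha * y i * (if i \<in> SL then evec 1 j else evec d j)) \<and>
        (\<forall>p\<in>{1..P}. p \<noteq> s i \<longrightarrow> X i p 1 = 0 \<and> X i p d = 0))"

definition event_E :: "nat \<Rightarrow> nat \<Rightarrow> nat \<Rightarrow> nat \<Rightarrow> real \<Rightarrow> real \<Rightarrow> real \<Rightarrow> (nat \<Rightarrow> real) \<Rightarrow> (nat \<Rightarrow> nat)
    \<Rightarrow> (nat \<Rightarrow> nat \<Rightarrow> nat \<Rightarrow> real) \<Rightarrow> (nat \<Rightarrow> nat \<Rightarrow> real) \<Rightarrow> bool" where
  "event_E N P d m sn s0 delta y s X W0 \<longleftrightarrow>
     (\<forall>i\<in>{1..N}. \<forall>j\<in>{1..P}. j \<noteq> s i \<longrightarrow>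
        sn^2 * d / 2 \<le> sqnorm d (X i j) \<and> sqnorm d (X i j) \<le> 3/2 * sn^2 * d) \<and>
     (\<forall>i\<in>{1..N}. \<forall>k\<in>{1..N}. \<forall>j\<in>{1..P}. \<forall>q\<in>{1..P}. j \<noteq> s i \<longrightarrow> q \<noteq> s k \<longrightarrow> (i, j) \<noteq> (k, q) \<longrightarrow>
        \<bar>ip d (X i j) (X k q)\<bar> \<le> 2 * sn^2 * sqrt (d * ln (16 * N^2 * P^2 / delta))) \<and>
     (\<forall>i\<in>{1..N}. \<forall>j\<in>{1..P}. j \<noteq> s i \<longrightarrow>
        infnorm_d d (X i j) \<le> sn * sqrt (2 * ln (16 * d * N * P / delta))) \<and>
     (\<forall>r\<in>{1..m}. sqrt (sqnorm d (W0 r)) \<le> 2 * s0 * sqrt d) \<and>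
     (\<forall>r\<in>{1..m}. \<bar>ip d (W0 r) (evec 1)\<bar> \<le> s0 * sqrt (2 * ln (16 * m / delta))) \<and>
     (\<forall>r\<in>{1..m}. \<forall>i\<in>{1..N}. \<forall>j\<in>{1..P}. j \<noteq> s i \<longrightarrow>
        \<bar>ip d (W0 r) (X i j)\<bar> \<le> 2 * s0 * sn * sqrt (d * ln (16 * N * m * P / delta))) \<and>
     s0 / 2 \<le> Max ((\<lambda>r. ip d (W0 r) (evec 1)) ` {1..m}) \<and>
     Max ((\<lambda>r. ip d (W0 r) (evec 1)) ` {1..m}) \<le> s0 * sqrt (2 * ln (16 * m / delta)) \<and>
     (\<forall>i\<in>{1..N}. \<forall>j\<in>{1..P}. j \<noteq> s i \<longrightarrow>
        s0 * sn * sqrt d / 4 \<le> Max ((\<lambda>r. y i * ip d (W0 r) (X i j)) ` {1..m}) \<and>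
        Max ((\<lambda>r. y i * ip d (W0 r) (X i j)) ` {1..m}) \<le> 2 * s0 * sn * sqrt (d * ln (16 * N * m * P / delta)))"

text \<open>Standing parameter conditions (i)-(ix) for the constant C.  pun = |S_U| / N.\<close>
definition standing_conds :: "real \<Rightarrow> nat \<Rightarrow> nat \<Rightarrow> nat \<Rightarrow> nat \<Rightarrow> real \<Rightarrow> real \<Rightarrow> real \<Rightarrow> real \<Rightarrow> real
    \<Rightarrow> real \<Rightarrow> real \<Rightarrow> nat \<Rightarrow> real \<Rightarrow> bool" where
  "standing_conds C N P d m alpha sn s0 eta eps Gam delta T pun \<longleftrightarrow>
     alpha > 0 \<and> sn > 0 \<and> s0 > 0 \<and> eta > 0 \<and> eps > 0 \<and> Gam > 0 \<and> 0 < delta \<and> delta < 1 \<and>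
     \<comment> \<open>(i)\<close>
     real T \<ge> C * N / (eta * s0 * sn^3 * d powr (3/2)) \<and>
     \<comment> \<open>(ii)\<close>
     real d \<ge> C * m^2 * P^2 * N^2 * (ln (T * N * m * P / delta))^4 \<and>
     \<comment> \<open>(iii)\<close>
     alpha \<ge> C * sn * sqrt d * ln (T * N * m * P / delta) / (N powr (1/3) * (1 - pun) powr (1/3)) \<and>
     \<comment> \<open>(iv)\<close>
     s0 \<le> inverse C * min (1 / (m powr (2/3) * P powr (2/3) * sn * sqrt d))
                (min (1 / (alpha * m powr (2/3))) (1 / (sn * m^2 * sqrt P * d)))
           / ln (T * d * N * m * P / delta) \<and>
     \<comment> \<open>(v)\<close>
     eta \<le> inverse C * min (1 / (alpha^3 * s0)) (min (1 / (sn^2 * d)) (1 / alpha^2))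
           / ln (T * N * m * P / delta) \<and>
     \<comment> \<open>(vi)\<close>
     C * sn * m * sqrt P * ln (T * d * N * P / delta) \<le> eps \<and>
     eps < inverse C * min alpha (1 / (m * s0 * d)) \<and>
     \<comment> \<open>(vii)\<close>
     (pun = 0 \<or> (C / N \<le> pun \<and> pun \<le> inverse C * ln d / N)) \<and>
     real N \<ge> C * m * P * ln (T * d * N * m * P / delta) \<and>
     \<comment> \<open>(viii)\<close>
     C * ln (N * P / delta) \<le> m \<and> m \<le> C * (ln d) powr C \<and> 2 \<le> P \<and> P \<le> C \<and>
     \<comment> \<open>(ix)\<close>
     Gam \<ge> C * d"

end

theory Submission
  imports Defs
begin


lemma phi_odd: "phi z - phi (- z) = z ^ 3"
  unfolding phi_def by (cases "z \<ge> 0") (auto simp: max_def power3_eq_cube)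

lemma fW_cube: "fW m P d W X = (\<Sum>r=1..m. \<Sum>p=1..P. (ip d (W r) (X p))^3)"
  unfolding fW_def by (simp add: phi_odd)

lemma ip_upd1:
  assumes "1 \<le> d"
  shows "ip d (v(1:=z)) x = ip d v x + (z - v 1) * x 1"
proof -
  have "ip d (v(1:=z)) x = (\<Sum>j=1..d. v j * x j + (if j = 1 then (z - v 1) * x 1 else 0))"
    unfolding ip_def by (rule sum.cong) (auto simp: algebra_simps)
  also have "\<dots> = ip d v x + (z - v 1) * x 1"
    using assms by (simp add: sum.distrib ip_def)
  finally show ?thesis .
qed

lemma ip_cong: "(\<And>j. j \<in> {1..d} \<Longrightarrow> x j = x' j) \<Longrightarrow> ip d v x = ip d v x'"
  unfolding ip_def by (rule sum.cong) auto

lemma ip_evec1: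
  assumes "1 \<le> d" "\<And>j. j \<in> {1..d} \<Longrightarrow> x j = c * evec 1 j"
  shows "ip d v x = v 1 * c"
proof -
  have "ip d v x = (\<Sum>j=1..d. if j = 1 then v 1 * c else 0)"
    unfolding ip_def by (rule sum.cong) (auto simp: assms(2) evec_def)
  also have "\<dots> = v 1 * c" using assms(1) by simp
  finally show ?thesis .
qed

lemma fW_upd:
  assumes "r \<in> {1..m}" "s \<in> {1..P}" "1 \<le> d" "\<And>p. p \<in> {1..P} \<Longrightarrow> p \<noteq> s \<Longrightarrow> X p 1 = 0"
  shows "fW m P d (W(r:=(W r)(1:=z))) X = fW m P d W X
     + (ip d (W r) (X s) + (z - W r 1) * X s 1)^3 - (ip d (W r) (X s))^3"
proof -
  define F where "F = (\<lambda>v. \<Sum>p=1..P. (ip d v (X p))^3)"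
  have fw: "fW m P d V X = (\<Sum>r=1..m. F (V r))" for V unfolding fW_cube F_def ..
  have "(\<Sum>r'=1..m. F ((W(r:=(W r)(1:=z))) r')) = F ((W r)(1:=z)) + (\<Sum>r'\<in>{1..m}-{r}. F (W r'))"
    using assms(1) by (simp add: sum.remove)
  moreover have "(\<Sum>r'=1..m. F (W r')) = F (W r) + (\<Sum>r'\<in>{1..m}-{r}. F (W r'))"
    using assms(1) by (simp add: sum.remove)
  moreover have "F ((W r)(1:=z)) - F (W r) = (ip d (W r) (X s) + (z - W r 1) * X s 1)^3 - (ip d (W r) (X s))^3"
  proof -
    have "F ((W r)(1:=z)) - F (W r) = (\<Sum>p=1..P. (ip d ((W r)(1:=z)) (X p))^3 - (ip d (W r) (X p))^3)"
      unfolding F_def by (simp add: sum_subtractf)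
    also have "\<dots> = (\<Sum>p=1..P. if p = s then (ip d (W r) (X s) + (z - W r 1) * X s 1)^3 - (ip d (W r) (X s))^3 else 0)"
    proof (rule sum.cong)
      fix p assume p: "p \<in> {1..P}"
      have e: "ip d ((W r)(1:=z)) (X p) = ip d (W r) (X p) + (z - W r 1) * X p 1"
        by (rule ip_upd1[OF assms(3)])
      show "(ip d ((W r)(1:=z)) (X p))^3 - (ip d (W r) (X p))^3 = (if p = s then (ip d (W r) (X s) + (z - W r 1) * X s 1)^3 - (ip d (W r) (X s))^3 else 0)"
        unfolding e using assms(4)[OF p] by auto
    qed simp
    also have "\<dots> = (ip d (W r) (X s) + (z - W r 1) * X s 1)^3 - (ip d (W r) (X s))^3"
      using assms(2) by simp
    finally show ?thesis .
  qed
  ultimately show ?thesis unfolding fw by linarith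
qed

lemma logloss_deriv:
  "DERIV (\<lambda>z. logloss (y * (K + (I + (z - w) * b)^3 - I^3))) w :>
     - (exp (-(y*K)) / (1 + exp (-(y*K)))) * (y * (3 * I^2 * b))"
proof -
  have "DERIV (\<lambda>z. y * (K + (I + (z - w) * b)^3 - I^3)) w :> y * (3 * (I + (w - w) * b)^2 * b)"
    by (auto intro!: derivative_eq_intros simp: power2_eq_square)
  then have d1: "DERIV (\<lambda>z. y * (K + (I + (z - w) * b)^3 - I^3)) w :> y * (3 * I^2 * b)" by simp
  have "DERIV (\<lambda>u. ln (1 + exp (- u))) u :> (1 / (1 + exp (-u))) * (exp (-u) * (-1))" for u :: real
  proof -
    have dd: "DERIV (\<lambda>u. 1 + exp (- u)) u :> 0 + exp (-u) * (-1)"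
      by (auto intro!: derivative_eq_intros)
    have p: "0 < 1 + exp (-u)" by (simp add: add_pos_pos)
    from DERIV_chain2[OF DERIV_ln[OF p] dd] show ?thesis by (simp add: field_simps)
  qed
  from DERIV_chain2[OF this[of "y * (K + (I + (w - w) * b)^3 - I^3)"] d1] show ?thesis
    unfolding logloss_def by (simp add: field_simps)
qed

definition sig :: "real \<Rightarrow> real" where "sig u = exp (- u) / (1 + exp (- u))"

lemma sig_bounds: "0 \<le> sig u" "sig u \<le> 1" "sig u \<le> exp (- u)"
proof -
  have p: "0 < 1 + exp (-u)" by (simp add: add_pos_pos)
  show "0 \<le> sig u" unfolding sig_def by simp
  show "sig u \<le> 1" unfolding sig_def using p by simp
  show "sig u \<le> exp (- u)" unfolding sig_def using p
    by (simp add: divide_le_eq mult_le_cancel_left1)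
qed

lemma deriv_term:
  assumes d2: "1 \<le> d" and r: "r \<in> {1..m}" and s: "s \<in> {1..P}"
    and noise: "\<And>p. p \<in> {1..P} \<Longrightarrow> p \<noteq> s \<Longrightarrow> X p 1 = 0"
    and sig: "\<And>j. j \<in> {1..d} \<Longrightarrow> X s j = b * evec 1 j"
    and yy: "y^2 = 1"
  shows "deriv (\<lambda>z. logloss (y * fW m P d (W(r := (W r)(1 := z))) X)) (W r 1)
     = - sig (y * fW m P d W X) * (3 * b^3 * y * (W r 1)^2)"
proof -
  let ?K = "fW m P d W X" and ?I = "ip d (W r) (X s)" and ?w = "W r 1"
  have b1: "X s 1 = b" using sig[of 1] d2 by (simp add: evec_def)
  have I: "?I = ?w * b" by (rule ip_evec1[OF d2 sig])
  have fe: "(\<lambda>z. logloss (y * fW m P d (W(r := (W r)(1 := z))) X)) =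
     (\<lambda>z. logloss (y * (?K + (?I + (z - ?w) * X s 1)^3 - ?I^3)))"
    by (rule ext, rule arg_cong[where f=logloss], rule arg_cong[where f="(*) y"], rule fW_upd[of r m s P d X W, OF r s d2 noise])
  have "deriv (\<lambda>z. logloss (y * (?K + (?I + (z - ?w) * X s 1)^3 - ?I^3))) ?w
      = - (exp (-(y*?K)) / (1 + exp (-(y*?K)))) * (y * (3 * ?I^2 * X s 1))"
    by (rule DERIV_imp_deriv[OF logloss_deriv])
  then show ?thesis unfolding fe sig_def[symmetric] I b1
    by (simp add: power2_eq_square power3_eq_cube algebra_simps)
qed

lemma sum_cube_lower:
  fixes f :: "nat \<Rightarrow> real"
  assumes "finite R" "r \<in> R" "\<And>r'. r' \<in> R \<Longrightarrow> - c \<le> f r'" "0 \<le> c" "0 \<le> a"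
  shows "(\<Sum>r'\<in>R. a^3 * (f r')^3) \<ge> a^3 * (f r)^3 - real (card R) * (a^3 * c^3)"
proof -
  have each: "a^3 * (f r')^3 \<ge> - (a^3 * c^3)" if "r' \<in> R" for r'
  proof -
    have "(- c)^3 \<le> (f r')^3" by (rule power_mono_odd) (simp_all add: assms(3)[OF that])
    then have "-(c^3) \<le> (f r')^3" by simp
    then show ?thesis using assms(5) by (metis mult_left_mono minus_mult_right zero_le_power)
  qed
  have "(\<Sum>r'\<in>R. a^3 * (f r')^3) = a^3 * (f r)^3 + (\<Sum>r'\<in>R-{r}. a^3 * (f r')^3)"
    using assms(1,2) by (simp add: sum.remove)
  also have "(\<Sum>r'\<in>R-{r}. a^3 * (f r')^3) \<ge> (\<Sum>r'\<in>R-{r}. - (a^3 * c^3))"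
    by (rule sum_mono) (use each in auto)
  moreover have "(\<Sum>r'\<in>R-{r}. - (a^3 * c^3)) \<ge> - (real (card R) * (a^3 * c^3))"
  proof -
    have "card (R - {r}) \<le> card R" using assms(1) by (simp add: card_mono)
    moreover have "0 \<le> a^3 * c^3" using assms by simp
    ultimately show ?thesis by (simp add: mult_right_mono)
  qed
  ultimately show ?thesis by linarith
qed

lemma inc_bound:
  fixes g :: "nat \<Rightarrow> real"
  assumes N: "0 < N" and g0: "\<And>i. i \<in> SL \<Longrightarrow> 0 \<le> g i" and gb: "\<And>i. i \<in> SL \<Longrightarrow> g i \<le> Bd"
    and Bd: "0 \<le> Bd" and eta: "0 \<le> eta"
  shows "0 \<le> eta / real N * (\<Sum>i=1..N. if i \<in> SL then g i else 0)"
        "eta / real N * (\<Sum>i=1..N. if i \<in> SL then g i else 0) \<le> eta * Bd"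
proof -
  have S0: "0 \<le> (\<Sum>i=1..N. if i \<in> SL then g i else 0)"
    by (rule sum_nonneg) (auto simp: g0)
  then show "0 \<le> eta / real N * (\<Sum>i=1..N. if i \<in> SL then g i else 0)"
    using eta by simp
  have "(\<Sum>i=1..N. if i \<in> SL then g i else 0) \<le> (\<Sum>i=1..N. Bd)"
    by (rule sum_mono) (auto simp: gb Bd)
  also have "\<dots> = real N * Bd" by simp
  finally have "(\<Sum>i=1..N. if i \<in> SL then g i else 0) \<le> real N * Bd" .
  then have "eta / real N * (\<Sum>i=1..N. if i \<in> SL then g i else 0) \<le> eta / real N * (real N * Bd)"
    using eta N by (intro mult_left_mono) auto
  also have "\<dots> = eta * Bd" using N by simp
  finally show "eta / real N * (\<Sum>i=1..N. if i \<in> SL then g i else 0) \<le> eta * Bd" .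
qed

lemma dyn:
  fixes w a z :: "nat \<Rightarrow> nat \<Rightarrow> real" and T :: nat
  assumes N: "0 < N"
  and step: "\<And>\<tau> r. \<tau> < t \<Longrightarrow> r \<in> {1..m} \<Longrightarrow> w (Suc \<tau>) r = w \<tau> r + eta / real N *
      (\<Sum>i=1..N. if i \<in> SL then sig (z \<tau> i) * (3 * a \<tau> i^3 * (w \<tau> r)^2) else 0)"
  and abnd: "\<And>\<tau> i. \<tau> < t \<Longrightarrow> i \<in> SL \<Longrightarrow> 4/5*\<alpha> \<le> a \<tau> i \<and> a \<tau> i \<le> 6/5*\<alpha>"
  and zbnd: "\<And>\<tau> i. \<tau> < t \<Longrightarrow> i \<in> SL \<Longrightarrow> z \<tau> i \<ge> (\<Sum>r\<in>{1..m}. a \<tau> i^3 * (w \<tau> r)^3) - 1/4"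
  and init: "\<And>r. r \<in> {1..m} \<Longrightarrow> \<bar>w 0 r\<bar> \<le> \<iota>"
  and iota: "real m * ((6/5*\<alpha>)^3 * \<iota>^3) \<le> 1/4" "\<iota> \<le> A/2" "0 \<le> \<iota>"
  and A: "A = lc / \<alpha>" "lc^3 = ln T" "1 \<le> lc" "0 < \<alpha>"
  and eta: "0 \<le> eta" "108 * eta * \<alpha>^2 * lc \<le> 1"
  and T: "t \<le> T" "1 \<le> T"
  shows "\<forall>r\<in>{1..m}. w t r \<le> 3 * A"
proof -
  have Apos: "0 < A" using A by simp
  have Tp: "0 < real T" using T by simp
  have inv: "\<tau> \<le> t \<Longrightarrow> \<forall>r\<in>{1..m}. w 0 r \<le> w \<tau> r \<and> w \<tau> r \<le> 5/2*A + real \<tau> * A / (2 * T)" for \<tau>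
  proof (induction \<tau>)
    case 0
    show ?case
    proof
      fix r assume r: "r \<in> {1..m}"
      have "w 0 r \<le> \<iota>" using init[OF r] by (auto dest!: abs_le_D1)
      then show "w 0 r \<le> w 0 r \<and> w 0 r \<le> 5/2*A + real 0 * A / (2 * T)" using iota Apos by simp
    qed
  next
    case (Suc \<tau>)
    then have tl: "\<tau> < t" by simp
    from Suc have IH: "\<forall>r\<in>{1..m}. w 0 r \<le> w \<tau> r \<and> w \<tau> r \<le> 5/2*A + real \<tau> * A / (2 * T)" by simp
    show ?case
    proof
      fix r assume r: "r \<in> {1..m}"
      define W where "W = w \<tau> r"
      define g where "g = (\<lambda>i. sig (z \<tau> i) * (3 * a \<tau> i^3 * W^2))"
      have wS: "w (Suc \<tau>) r = W + eta / real N * (\<Sum>i=1..N. if i \<in> SL then g i else 0)"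
        using step[OF tl r] unfolding W_def g_def by simp
      have W0: "w 0 r \<le> W" and Wu: "W \<le> 5/2*A + real \<tau> * A / (2 * T)" using IH r unfolding W_def by auto
      have Wlow: "- A \<le> W" using W0 init[OF r] iota Apos by (auto dest!: abs_le_D2)
      have "real \<tau> \<le> real T" using tl T by simp
      then have "real \<tau> * A / (2 * T) \<le> A / 2" using Apos Tp by (simp add: field_simps)
      then have W3: "W \<le> 3 * A" using Wu by linarith
      have g0: "0 \<le> g i" if "i \<in> SL" for i
        using abnd[OF tl that] A sig_bounds(1)[of "z \<tau> i"] unfolding g_def by simp
      have a3: "a \<tau> i^3 \<le> (6/5*\<alpha>)^3" if "i \<in> SL" for i
        using abnd[OF tl that] A by (intro power_mono) auto
      have gb: "g i \<le> sig (z \<tau> i) * (6 * \<alpha>^3 * W^2)" if "i \<in> SL" for i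
      proof -
        have "3 * a \<tau> i^3 * W^2 \<le> 3 * (6/5*\<alpha>)^3 * W^2" using a3[OF that] by (simp add: mult_right_mono)
        also have "\<dots> = (648/125) * \<alpha>^3 * W^2" by (simp add: power3_eq_cube)
        also have "\<dots> \<le> 6 * \<alpha>^3 * W^2" using A by (intro mult_right_mono) auto
        finally show ?thesis unfolding g_def using sig_bounds(1)[of "z \<tau> i"] by (simp add: mult_left_mono)
      qed
      have incnn: "0 \<le> eta / real N * (\<Sum>i=1..N. if i \<in> SL then g i else 0)"
        using eta(1) by (intro mult_nonneg_nonneg sum_nonneg) (auto simp: g0)
      have lowpart: "w 0 r \<le> w (Suc \<tau>) r" using wS incnn W0 by simp
      have uppart: "w (Suc \<tau>) r \<le> 5/2*A + real (Suc \<tau>) * A / (2 * T)"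
      proof (cases "W \<le> 2 * A")
        case True
        have W2: "W^2 \<le> 4 * A^2"
        proof -
          have "\<bar>W\<bar> \<le> 2 * A" using True Wlow Apos by auto
          then have "\<bar>W\<bar>^2 \<le> (2*A)^2" by (intro power_mono) auto
          then show ?thesis by (simp add: power_mult_distrib)
        qed
        have gb2: "g i \<le> 24 * \<alpha>^3 * A^2" if "i \<in> SL" for i
        proof -
          have "g i \<le> sig (z \<tau> i) * (6 * \<alpha>^3 * W^2)" by (rule gb[OF that])
          also have "\<dots> \<le> 1 * (6 * \<alpha>^3 * W^2)" using sig_bounds(2)[of "z \<tau> i"] A
            by (intro mult_right_mono) auto
          also have "\<dots> \<le> 6 * \<alpha>^3 * (4 * A^2)" using W2 A by (simp add: mult_left_mono)
          finally show ?thesis by simp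
        qed
        have "eta / real N * (\<Sum>i=1..N. if i \<in> SL then g i else 0) \<le> eta * (24 * \<alpha>^3 * A^2)"
          by (rule inc_bound(2)[OF N g0 gb2 _ eta(1)]) (use A in auto)
        also have "\<dots> = (48 * eta * \<alpha>^2 * lc) * (A / 2)"
          using A by (simp add: power2_eq_square power3_eq_cube field_simps)
        also have "\<dots> \<le> 1 * (A / 2)" using eta A Apos by (intro mult_right_mono) auto
        finally have "eta / real N * (\<Sum>i=1..N. if i \<in> SL then g i else 0) \<le> A / 2" by simp
        then have "w (Suc \<tau>) r \<le> 5/2*A" using wS True by linarith
        moreover have "0 \<le> real (Suc \<tau>) * A / (2 * T)" using Apos Tp by simp
        ultimately show ?thesis by linarith
      next
        case False
        have LT: "ln T = lc^3" using A by simp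
        have Lge1: "1 \<le> lc^3" using A(3) by (rule one_le_power)
        have zb: "z \<tau> i \<ge> 2 * ln T" if "i \<in> SL" for i
        proof -
          let ?a = "a \<tau> i"
          have ap: "0 \<le> ?a" using abnd[OF tl that] A by simp
          have "(\<Sum>r\<in>{1..m}. ?a^3 * (w \<tau> r)^3) \<ge> ?a^3 * W^3 - real (card {1..m}) * (?a^3 * \<iota>^3)"
            unfolding W_def
          proof (rule sum_cube_lower[OF _ r _ iota(3) ap])
            fix r' assume r': "r' \<in> {1..m}"
            have "- \<iota> \<le> w 0 r'" using init[OF r'] by (auto dest!: abs_le_D2)
            also have "\<dots> \<le> w \<tau> r'" using IH r' by auto
            finally show "- \<iota> \<le> w \<tau> r'" .
          qed simp
          moreover have "real (card {1..m}) * (?a^3 * \<iota>^3) \<le> 1/4"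
          proof -
            have "real m * (?a^3 * \<iota>^3) \<le> real m * ((6/5*\<alpha>)^3 * \<iota>^3)"
              using a3[OF that] iota(3) by (intro mult_left_mono mult_right_mono) auto
            then show ?thesis using iota(1) by simp
          qed
          moreover have "?a^3 * W^3 \<ge> (4/5*\<alpha>)^3 * (2*A)^3"
            using abnd[OF tl that] False A Apos by (intro mult_mono power_mono) auto
          moreover have "(4/5*\<alpha>)^3 * (2*A)^3 = 512/125 * lc^3"
          proof -
            have "(4/5*\<alpha>)^3 * (2*A)^3 = ((4/5*\<alpha>) * (2*A))^3" by (simp only: power_mult_distrib)
            also have "(4/5*\<alpha>) * (2*A) = 8/5 * (A * \<alpha>)" by simp
            also have "(8/5 * (A * \<alpha>))^3 = (8/5)^3 * (A * \<alpha>)^3" by (simp only: power_mult_distrib)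
            also have "(8/5::real)^3 = 512/125" by (simp add: power3_eq_cube)
            also have "A * \<alpha> = lc" using A by simp
            finally show ?thesis .
          qed
          ultimately have "z \<tau> i \<ge> 512/125 * lc^3 - 1/2" using zbnd[OF tl that] by linarith
          then show ?thesis using Lge1 LT by linarith
        qed
        have eT: "exp (- (2 * ln (real T))) = 1 / (real T)^2"
          proof -
            have "exp (2 * ln (real T)) = exp (ln (real T))^2" using exp_of_nat_mult[of 2 "ln (real T)"] by simp
            then have "exp (2 * ln (real T)) = (real T)^2" using Tp by simp
            then show ?thesis by (simp add: exp_minus inverse_eq_divide)
          qed
        have W2: "W^2 \<le> 9 * A^2"
        proof -
          have "\<bar>W\<bar> \<le> 3 * A" using W3 Wlow Apos by auto
          then have "\<bar>W\<bar>^2 \<le> (3*A)^2" by (intro power_mono) auto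
          then show ?thesis by (simp add: power_mult_distrib)
        qed
        have gb2: "g i \<le> 54 * \<alpha>^3 * A^2 / (real T)^2" if "i \<in> SL" for i
        proof -
          have "g i \<le> sig (z \<tau> i) * (6 * \<alpha>^3 * W^2)" by (rule gb[OF that])
          also have "\<dots> \<le> (1 / (real T)^2) * (6 * \<alpha>^3 * W^2)"
          proof (intro mult_right_mono)
            have "sig (z \<tau> i) \<le> exp (- z \<tau> i)" by (rule sig_bounds(3))
            also have "\<dots> \<le> exp (- (2 * ln (real T)))" using zb[OF that] by simp
            finally show "sig (z \<tau> i) \<le> 1 / (real T)^2" using eT by simp
          qed (use A in auto)
          also have "\<dots> \<le> (1 / (real T)^2) * (6 * \<alpha>^3 * (9 * A^2))" using W2 A by (intro mult_left_mono) auto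
          finally show ?thesis by simp
        qed
        have "eta / real N * (\<Sum>i=1..N. if i \<in> SL then g i else 0) \<le> eta * (54 * \<alpha>^3 * A^2 / (real T)^2)"
          by (rule inc_bound(2)[OF N g0 gb2 _ eta(1)]) (use A in auto)
        also have "\<dots> = (108 * eta * \<alpha>^2 * lc) * (A / (2 * T)) / real T"
          unfolding A(1) using A(4) Tp by (simp add: field_simps power2_eq_square power3_eq_cube)
        also have "\<dots> \<le> 1 * (A / (2 * T)) / 1" using eta A Apos Tp T
          by (intro divide_mono mult_right_mono) auto
        finally have "eta / real N * (\<Sum>i=1..N. if i \<in> SL then g i else 0) \<le> A / (2 * T)" by simp
        moreover have "real (Suc \<tau>) * A / (2 * T) = real \<tau> * A / (2 * T) + A / (2 * T)"
          by (simp add: add_divide_distrib distrib_left distrib_right)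
        ultimately show ?thesis using wS Wu by linarith
      qed
      show "w 0 r \<le> w (Suc \<tau>) r \<and> w (Suc \<tau>) r \<le> 5/2*A + real (Suc \<tau>) * A / (2 * T)"
        using lowpart uppart by simp
    qed
  qed
  show ?thesis
  proof
    fix r assume r: "r \<in> {1..m}"
    have "w t r \<le> 5/2*A + real t * A / (2 * T)" using inv[of t] r by simp
    moreover have "real t * A / (2 * T) \<le> A / 2"
    proof -
      have "real t * A \<le> real T * A" using T Apos by (intro mult_right_mono) auto
      then show ?thesis using Tp by (simp add: field_simps)
    qed
    ultimately show "w t r \<le> 3 * A" by linarith
  qed
qed

lemma deriv_zero:
  assumes d1: "1 \<le> d" and r: "r \<in> {1..m}" and P: "1 \<le> P"
    and noise: "\<And>p. p \<in> {1..P} \<Longrightarrow> X p 1 = 0"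
  shows "deriv (\<lambda>z. logloss (y * fW m P d (W(r := (W r)(1 := z))) X)) w = 0"
proof -
  have s: "1 \<in> {1..P}" using P by simp
  have "(\<lambda>z. logloss (y * fW m P d (W(r := (W r)(1 := z))) X)) = (\<lambda>z. logloss (y * fW m P d W X))"
  proof (rule ext)
    fix z
    have "fW m P d (W(r := (W r)(1 := z))) X = fW m P d W X
      + (ip d (W r) (X 1) + (z - W r 1) * X 1 1)^3 - (ip d (W r) (X 1))^3"
      by (rule fW_upd[OF r s d1]) (use noise in auto)
    also have "\<dots> = fW m P d W X" using noise[OF s] by simp
    finally show "logloss (y * fW m P d (W(r := (W r)(1 := z))) X) = logloss (y * fW m P d W X)" by simp
  qed
  then show ?thesis by simp
qed

lemma zlemma:
  assumes d1: "1 \<le> d" and s: "s \<in> {1..P}" and yy: "y = 1 \<or> y = -1"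
    and sig: "\<And>j. j \<in> {1..d} \<Longrightarrow> X s j = (a * y) * evec 1 j"
    and nb: "\<And>r p. r \<in> {1..m} \<Longrightarrow> p \<in> {1..P} \<Longrightarrow> p \<noteq> s \<Longrightarrow> \<bar>ip d (W r) (X p)\<bar> \<le> B"
    and B: "0 \<le> B" and mP: "real m * real P * B^3 \<le> 1/4"
  shows "y * fW m P d W X \<ge> (\<Sum>r\<in>{1..m}. a^3 * (W r 1)^3) - 1/4"
proof -
  define R where "R = (\<lambda>r. \<Sum>p\<in>{1..P}-{s}. (ip d (W r) (X p))^3)"
  have y4: "y * (c * (a * y))^3 = a^3 * c^3" for c using yy by (auto simp: power_mult_distrib)
  have "fW m P d W X = (\<Sum>r=1..m. (W r 1 * (a * y))^3 + R r)"
    unfolding fW_cube R_def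
  proof (rule sum.cong[OF refl])
    fix r assume r: "r \<in> {1..m}"
    have "(\<Sum>p=1..P. (ip d (W r) (X p))^3) = (ip d (W r) (X s))^3 + (\<Sum>p\<in>{1..P}-{s}. (ip d (W r) (X p))^3)"
      using s by (simp add: sum.remove)
    also have "ip d (W r) (X s) = W r 1 * (a * y)" by (rule ip_evec1[OF d1 sig])
    finally show "(\<Sum>p=1..P. (ip d (W r) (X p))^3) = (W r 1 * (a * y))^3 + (\<Sum>p\<in>{1..P}-{s}. (ip d (W r) (X p))^3)" .
  qed
  then have "y * fW m P d W X = (\<Sum>r=1..m. a^3 * (W r 1)^3) + (\<Sum>r=1..m. y * R r)"
    by (simp add: sum_distrib_left distrib_left sum.distrib y4)
  moreover have "\<bar>\<Sum>r=1..m. y * R r\<bar> \<le> 1/4"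
  proof -
    have Rb: "\<bar>y * R r\<bar> \<le> real P * B^3" if r: "r \<in> {1..m}" for r
    proof -
      have "\<bar>y * R r\<bar> = \<bar>R r\<bar>" using yy by auto
      also have "\<dots> \<le> (\<Sum>p\<in>{1..P}-{s}. \<bar>(ip d (W r) (X p))^3\<bar>)" unfolding R_def by (rule sum_abs)
      also have "\<dots> \<le> (\<Sum>p\<in>{1..P}-{s}. B^3)"
      proof (rule sum_mono)
        fix p assume p: "p \<in> {1..P}-{s}"
        have "\<bar>ip d (W r) (X p)\<bar>^3 \<le> B^3" using nb[OF r] p by (intro power_mono) auto
        then show "\<bar>(ip d (W r) (X p))^3\<bar> \<le> B^3" by (simp add: power_abs)
      qed
      also have "\<dots> = real (card ({1..P}-{s})) * B^3" by simp
      also have "\<dots> \<le> real P * B^3" using B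
      proof (intro mult_right_mono)
        have "card ({1..P}-{s}) \<le> card {1..P}" by (rule card_mono) auto
        then show "real (card ({1..P}-{s})) \<le> real P" by simp
      qed simp
      finally show ?thesis .
    qed
    have "\<bar>\<Sum>r=1..m. y * R r\<bar> \<le> (\<Sum>r=1..m. \<bar>y * R r\<bar>)" by (rule sum_abs)
    also have "\<dots> \<le> (\<Sum>r=1..m. real P * B^3)" by (rule sum_mono) (rule Rb)
    also have "\<dots> = real m * real P * B^3" by simp
    finally show ?thesis using mP by linarith
  qed
  ultimately show ?thesis by (simp add: abs_le_iff)
qed

lemma sampleSL:
  assumes d2: "2 \<le> d" and s: "s \<in> {1..P}" and yy: "y = 1 \<or> y = -1" and a0: "0 < \<alpha>"
    and sig: "\<And>j. j \<in> {1..d} \<Longrightarrow> X s j = \<alpha> * y * evec 1 j"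
    and feas: "adv_feasible P d eps X s X'" and eps: "eps \<le> \<alpha> / 5"
  shows "\<exists>a. 4/5*\<alpha> \<le> a \<and> a \<le> 6/5*\<alpha> \<and> (\<forall>j\<in>{1..d}. X' s j = (a * y) * evec 1 j)"
proof -
  obtain c where c: "\<And>p j. p \<in> {1..P} \<Longrightarrow> j \<in> {1..d} \<Longrightarrow> X' p j - X p j = (if p = s then c * X p j else 0)"
    and e: "\<And>p j. p \<in> {1..P} \<Longrightarrow> j \<in> {1..d} \<Longrightarrow> \<bar>X' p j - X p j\<bar> \<le> eps"
    using feas unfolding adv_feasible_def by blast
  have j1: "(1::nat) \<in> {1..d}" using d2 by simp
  have X1: "X s 1 = \<alpha> * y" using sig[OF j1] by (simp add: evec_def)
  have "\<bar>c * X s 1\<bar> \<le> eps" using e[OF s j1] c[OF s j1] by simp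
  then have "\<bar>c\<bar> * \<alpha> \<le> eps" unfolding X1 using yy a0 by (auto simp: abs_mult)
  then have ca: "\<bar>c * \<alpha>\<bar> \<le> \<alpha> / 5" using eps a0 by (simp only: abs_mult abs_of_pos)
  show ?thesis
  proof (intro exI conjI ballI)
    show "4/5*\<alpha> \<le> (1 + c) * \<alpha>" using ca by (auto simp: algebra_simps abs_le_iff)
    show "(1 + c) * \<alpha> \<le> 6/5*\<alpha>" using ca by (auto simp: algebra_simps abs_le_iff)
    fix j assume j: "j \<in> {1..d}"
    have "X' s j = X s j + c * X s j" using c[OF s j] by simp
    then show "X' s j = ((1 + c) * \<alpha> * y) * evec 1 j" using sig[OF j] by (simp add: algebra_simps)
  qed
qed

lemma sample_noise:
  assumes p: "p \<in> {1..P}" "p \<noteq> s" and j: "j \<in> {1..d}" and feas: "adv_feasible P d eps X s X'"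
  shows "X' p j = X p j"
  using feas p j unfolding adv_feasible_def by force

lemma sampleSU:
  assumes d2: "2 \<le> d" and s: "s \<in> {1..P}"
    and sig: "\<And>j. j \<in> {1..d} \<Longrightarrow> X s j = \<alpha> * y * evec d j"
    and feas: "adv_feasible P d eps X s X'"
  shows "X' s 1 = 0"
proof -
  have j1: "(1::nat) \<in> {1..d}" using d2 by simp
  have X1: "X s 1 = 0" using sig[OF j1] d2 by (simp add: evec_def)
  obtain c where c: "\<And>p j. p \<in> {1..P} \<Longrightarrow> j \<in> {1..d} \<Longrightarrow> X' p j - X p j = (if p = s then c * X p j else 0)"
    using feas unfolding adv_feasible_def by blast
  show ?thesis using c[OF s j1] X1 by simp
qed



lemma sqrt_le_self: "1 \<le> (x::real) \<Longrightarrow> sqrt x \<le> x"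
proof -
  assume x: "1 \<le> x"
  have "sqrt x * 1 \<le> sqrt x * sqrt x" using x by (intro mult_left_mono real_sqrt_ge_one) auto
  then show ?thesis using x by simp
qed

lemma ln2_half: "1/2 \<le> ln (2::real)"
proof -
  have "exp (1/2::real)^2 = exp 1" by (simp add: exp_double[symmetric])
  also have "\<dots> \<le> 2^2" using exp_le by simp
  finally have "exp (1/2::real) \<le> 2" by (rule power2_le_imp_le) simp
  then show ?thesis by (subst ln_ge_iff) auto
qed

lemma NL_T:
  fixes C n mm p dd eta s0 sn La Lb TT :: real
  assumes C: "1 \<le> C" and n: "1 \<le> n" and mm: "1 \<le> mm" and p: "1 \<le> p" and dd: "1 \<le> dd"
    and pos: "0 < eta" "0 < s0" "0 < sn" and La: "1/2 \<le> La" and Lb: "La \<le> Lb"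
    and h1: "C * n / (eta * s0 * sn^3 * (dd * sqrt dd)) \<le> TT"
    and h2: "eta \<le> inverse C * (1 / (sn^2 * dd)) / La"
    and h3: "s0 \<le> inverse C * (1 / (sn * mm^2 * sqrt p * dd)) / Lb"
  shows "C^3 / 4 \<le> TT"
proof -
  have sd: "1 \<le> sqrt dd" "sqrt dd \<le> dd" using dd by (auto simp: sqrt_le_self)
  have Lbp: "1/2 \<le> Lb" using La Lb by simp
  define X where "X = 1 / (C * sn^2 * dd * La)"
  define Y where "Y = 1 / (C * sn * mm^2 * sqrt p * dd * Lb)"
  have e2: "eta \<le> X" using h2 unfolding X_def by (simp add: field_simps)
  have s3: "s0 \<le> Y" using h3 unfolding Y_def by (simp add: field_simps)
  define Q where "Q = eta * s0 * sn^3 * (dd * sqrt dd)"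
  have Qp: "0 < Q" unfolding Q_def using pos sd by simp
  have "eta * s0 \<le> X * Y" using e2 s3 pos by (intro mult_mono) auto
  then have "Q \<le> X * Y * (sn^3 * (dd * sqrt dd))"
    unfolding Q_def using pos sd by (simp add: mult.assoc mult_right_mono)
  also have "\<dots> = sqrt dd / (C^2 * dd * (mm^2 * sqrt p) * (La * Lb))"
    unfolding X_def Y_def using pos sd La Lbp C by (simp add: field_simps power2_eq_square power3_eq_cube)
  also have "\<dots> \<le> 4 / C^2"
  proof -
    have "1 \<le> mm^2" using mm by simp
    moreover have "1 \<le> sqrt p" using p by simp
    ultimately have m1: "1 \<le> mm^2 * sqrt p" using mult_mono[of 1 "mm^2" 1 "sqrt p"] by simp
    have L4: "1/4 \<le> La * Lb" using mult_mono[OF La Lbp] La by simp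
    have K: "1/4 \<le> (mm^2 * sqrt p) * (La * Lb)"
      using mult_mono[OF m1 L4] L4 m1 by simp
    define KK where "KK = (mm^2 * sqrt p) * (La * Lb)"
    have "dd * (1/4) \<le> dd * KK"
      using K dd unfolding KK_def by (intro mult_left_mono) auto
    then have "sqrt dd \<le> 4 * (dd * KK)" using sd by linarith
    then have "sqrt dd \<le> 4 * (dd * (mm^2 * sqrt p) * (La * Lb))" unfolding KK_def by (simp add: mult.assoc)
    then show ?thesis using C La Lbp sd m1 by (simp add: field_simps)
  qed
  finally have Q4: "Q \<le> 4 / C^2" .
  have "C^3 / 4 = C / (4 / C^2)" using C by (simp add: field_simps power3_eq_cube power2_eq_square)
  also have "\<dots> \<le> C / Q" using Qp Q4 C by (intro divide_left_mono) auto
  also have "\<dots> \<le> C * n / Q" using C n Qp by (intro divide_right_mono) auto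
  also have "\<dots> \<le> TT" using h1 unfolding Q_def .
  finally show ?thesis .
qed

lemma NL_iota:
  fixes C \<alpha> mm mp s0 Lm Lb l3 :: real
  assumes C: "8 \<le> C" and a: "0 < \<alpha>" and mm: "1 \<le> mm" and mp: "1 \<le> mp" "mp^3 = mm^2"
    and s0: "0 < s0" and Lm: "1 \<le> Lm" "Lm \<le> Lb" and l3: "1 \<le> l3"
    and h: "s0 \<le> inverse C * (1 / (\<alpha> * mp)) / Lb"
  shows "s0 * sqrt (2 * Lm) \<le> (l3 / \<alpha>) / 2" "mm * ((6/5*\<alpha>)^3 * (s0 * sqrt (2 * Lm))^3) \<le> 1/4"
    "0 \<le> s0 * sqrt (2 * Lm)"
proof -
  have Lb: "1 \<le> Lb" using Lm by simp
  have sq: "sqrt (2 * Lm) \<le> 2 * Lm" using Lm by (intro sqrt_le_self) simp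
  have s0': "s0 \<le> 1 / (C * \<alpha> * mp * Lb)" using h by (simp add: field_simps)
  define \<kappa> where "\<kappa> = 2 / (C * \<alpha> * mp)"
  have "s0 * sqrt (2 * Lm) \<le> 1 / (C * \<alpha> * mp * Lb) * (2 * Lm)"
    using s0' sq s0 C a mp Lb Lm by (intro mult_mono) auto
  also have "\<dots> \<le> 1 / (C * \<alpha> * mp * Lb) * (2 * Lb)"
    using Lm C a mp Lb by (intro mult_left_mono) auto
  also have "\<dots> = \<kappa>" unfolding \<kappa>_def using Lb by simp
  finally have ik: "s0 * sqrt (2 * Lm) \<le> \<kappa>" .
  have i0: "0 \<le> s0 * sqrt (2 * Lm)" using s0 Lm by simp
  then show "0 \<le> s0 * sqrt (2 * Lm)" .
  have "\<kappa> \<le> 2 / (C * \<alpha>)" unfolding \<kappa>_def using C a mp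
    by (intro divide_left_mono) (auto intro: mult_left_mono[of 1 mp, simplified])
  also have "\<dots> \<le> (l3 / \<alpha>) / 2"
  proof -
    have "8 * 1 \<le> C * l3" using C l3 by (intro mult_mono) auto
    then show ?thesis using C a l3 by (simp add: field_simps)
  qed
  finally show "s0 * sqrt (2 * Lm) \<le> (l3 / \<alpha>) / 2" using ik by linarith
  have "(s0 * sqrt (2 * Lm))^3 \<le> \<kappa>^3" using ik i0 by (intro power_mono) auto
  also have "\<kappa>^3 = 8 / (C^3 * \<alpha>^3 * mm^2)" unfolding \<kappa>_def using mp
    by (simp add: power_divide power_mult_distrib)
  finally have "mm * ((6/5*\<alpha>)^3 * (s0 * sqrt (2 * Lm))^3) \<le> mm * ((6/5*\<alpha>)^3 * (8 / (C^3 * \<alpha>^3 * mm^2)))"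
    using mm a by (intro mult_left_mono) auto
  also have "\<dots> = (1728/125) / (C^3 * mm)" using a mm by (simp add: power_mult_distrib power2_eq_square field_simps)
  also have "\<dots> \<le> (1728/125) / (8^3 * 1)" using C mm
    by (intro divide_left_mono mult_mono power_mono) auto
  also have "\<dots> \<le> 1/4" by simp
  finally show "mm * ((6/5*\<alpha>)^3 * (s0 * sqrt (2 * Lm))^3) \<le> 1/4" .
qed

lemma NL_eta:
  fixes C eta \<alpha> La l3 :: real
  assumes C: "108 \<le> C" and e: "0 \<le> eta" and a: "0 < \<alpha>" and l3: "0 \<le> l3" "l3 \<le> La"
    and h: "eta \<le> inverse C * (1 / \<alpha>^2) / La"
  shows "108 * eta * \<alpha>^2 * l3 \<le> 1"
proof -
  have La: "0 < La \<or> l3 = 0" using l3 by auto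
  show ?thesis
  proof (cases "l3 = 0")
    case True then show ?thesis by simp
  next
    case False
    then have La: "0 < La" using l3 by auto
    have "eta * \<alpha>^2 \<le> 1 / (C * La)" using h a La C by (simp add: field_simps)
    then have "eta * \<alpha>^2 * l3 \<le> (1 / (C * La)) * La"
      using l3 e a La C by (intro mult_mono) auto
    also have "\<dots> = 1 / C" using La by simp
    finally have "108 * eta * \<alpha>^2 * l3 \<le> 108 / C" by simp
    also have "\<dots> \<le> 1" using C by simp
    finally show ?thesis .
  qed
qed

lemma cube_sum_le: "0 \<le> x \<Longrightarrow> 0 \<le> y \<Longrightarrow> (x + y)^3 \<le> 4 * (x^3 + y^3)" for x y :: real
proof -
  assume "0 \<le> x" "0 \<le> y"
  then have "0 \<le> 3 * (x + y) * (x - y)^2" by simp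
  moreover have "4 * (x^3 + y^3) - (x + y)^3 = 3 * (x + y) * (x - y)^2"
    by (simp add: power2_eq_square power3_eq_cube algebra_simps)
  ultimately show ?thesis by linarith
qed

lemma lnd_cube: "1 \<le> dd \<Longrightarrow> (ln dd)^3 \<le> 216 * sqrt dd" for dd :: real
proof -
  assume dd: "1 \<le> dd"
  define q where "q = dd powr (1/6)"
  have qp: "0 < q" unfolding q_def using dd by simp
  have "ln q = ln dd / 6" unfolding q_def using dd by (simp add: ln_powr)
  then have l: "ln dd = 6 * ln q" by simp
  have l0: "0 \<le> ln dd" using dd by simp
  have "ln dd \<le> 6 * q" unfolding l using ln_less_self[OF qp] by simp
  then have "(ln dd)^3 \<le> (6 * q)^3" using l0 by (intro power_mono) auto
  also have "(6 * q)^3 = 216 * (q * q * q)" by (simp add: power3_eq_cube)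
  also have "q * q * q = dd powr (1/2)" unfolding q_def using dd by (simp add: powr_add[symmetric])
  also have "dd powr (1/2) = sqrt dd" using dd by (simp add: powr_half_sqrt)
  finally show ?thesis .
qed

lemma NL_noise:
  fixes C s0 sn dd Lq Lb mp pp mm p pun n l3 Lg La :: real
  assumes C: "1000000 \<le> C" and s0: "0 < s0" and sn: "0 < sn" and dd: "1 \<le> dd"
    and Lq: "0 \<le> Lq" "Lq \<le> Lb" and Lb: "1 \<le> Lb"
    and mp: "1 \<le> mp" "mp^3 = mm^2" and pp: "1 \<le> pp" "pp^3 = p^2"
    and mm: "1 \<le> mm" and p: "1 \<le> p" "p \<le> C" and n: "1 \<le> n"
    and hs0: "s0 \<le> inverse C * (1 / (mp * pp * sn * sqrt dd)) / Lb"
    and pun: "0 \<le> pun * n" "pun * n \<le> ln dd / C"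
    and Lg: "1 \<le> Lg" "Lg \<le> 2 * La" and La: "1 \<le> La" and l3: "0 \<le> l3" "l3^3 \<le> La"
    and ddb: "C * mm^2 * p^2 * n^2 * La^4 \<le> dd"
  shows "mm * p * (3 * s0 * sn * sqrt (dd * Lq) + 21 * pun * n * p * l3 / sqrt dd * sqrt Lg)^3 \<le> 1/4"
    "0 \<le> 3 * s0 * sn * sqrt (dd * Lq) + 21 * pun * n * p * l3 / sqrt dd * sqrt Lg"
proof -
  define B1 where "B1 = 3 * s0 * sn * sqrt (dd * Lq)"
  define B2 where "B2 = 21 * pun * n * p * l3 / sqrt dd * sqrt Lg"
  have sdd: "1 \<le> sqrt dd" using dd by simp
  have Cp: "0 < C" using C by simp
  have B1p: "0 \<le> B1" unfolding B1_def using s0 sn dd Lq by simp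
  have B2p: "0 \<le> B2"
  proof -
    have "0 \<le> 21 * (pun * n) * p * l3" using pun p l3 by simp
    moreover have "B2 = (21 * (pun * n) * p * l3) * sqrt Lg / sqrt dd" unfolding B2_def by simp
    ultimately show ?thesis using Lg sdd by (metis divide_nonneg_nonneg mult_nonneg_nonneg real_sqrt_ge_zero order_trans zero_le_one)
  qed
  show "0 \<le> 3 * s0 * sn * sqrt (dd * Lq) + 21 * pun * n * p * l3 / sqrt dd * sqrt Lg"
    using B1p B2p unfolding B1_def B2_def by simp
  have "s0 * sn * sqrt dd \<le> 1 / (C * mp * pp * Lb)"
    using hs0 sn sdd Cp mp pp Lb by (simp add: field_simps)
  moreover have "sqrt Lq \<le> Lb"
  proof -
    have "sqrt Lq \<le> sqrt Lb" using Lq by simp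
    also have "\<dots> \<le> Lb" using Lb by (rule sqrt_le_self)
    finally show ?thesis .
  qed
  ultimately have "(s0 * sn * sqrt dd) * sqrt Lq \<le> 1 / (C * mp * pp * Lb) * Lb"
    using s0 sn Lq Cp mp pp Lb dd by (intro mult_mono) auto
  then have "B1 \<le> 3 * (1 / (C * mp * pp * Lb) * Lb)"
    unfolding B1_def using dd Lq by (simp add: real_sqrt_mult mult.assoc)
  also have "\<dots> = 3 / (C * mp * pp)" using Lb by simp
  finally have B1b: "B1 \<le> 3 / (C * mp * pp)" .
  have "B1^3 \<le> (3 / (C * mp * pp))^3" using B1b B1p by (intro power_mono) auto
  also have "\<dots> = 27 / (C^3 * mm^2 * p^2)" using mp pp by (simp add: power_divide power_mult_distrib)
  finally have B1c: "B1^3 \<le> 27 / (C^3 * mm^2 * p^2)" .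
  have mB1: "mm * p * B1^3 \<le> 27 / C^3"
  proof -
    have "mm * p * B1^3 \<le> mm * p * (27 / (C^3 * mm^2 * p^2))"
      using B1c mm p by (intro mult_left_mono) auto
    also have "\<dots> = 27 / (C^3 * (mm * p))" using mm p by (simp add: power2_eq_square field_simps)
    also have "\<dots> \<le> 27 / (C^3 * 1)" using mm p Cp
      using mult_mono[of 1 mm 1 p] by (intro divide_left_mono mult_left_mono) auto
    finally show ?thesis by simp
  qed
  define K2 where "K2 = 21 * (ln dd / C) * p * l3 * sqrt Lg / sqrt dd"
  have "B2 = 21 * (pun * n) * p * l3 * sqrt Lg / sqrt dd" unfolding B2_def by simp
  also have "\<dots> \<le> K2" unfolding K2_def using pun p l3 Lg sdd
    by (intro divide_right_mono mult_right_mono mult_left_mono) auto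
  finally have B2b: "B2 \<le> K2" .
  have "B2^3 \<le> K2^3" using B2b B2p by (intro power_mono) auto
  also have "K2^3 = 21^3 * (ln dd)^3 * p^3 * l3^3 * (sqrt Lg)^3 / (C^3 * (sqrt dd)^3)"
    unfolding K2_def by (simp add: power_divide power_mult_distrib)
  also have "\<dots> \<le> 21^3 * (216 * sqrt dd) * p^3 * La * (4 * La^2) / (C^3 * (dd * sqrt dd))"
  proof -
    have sL: "(sqrt Lg)^3 \<le> 4 * La^2"
    proof -
      have "(sqrt Lg)^3 = Lg * sqrt Lg" using Lg by (simp add: power3_eq_cube)
      also have "\<dots> \<le> Lg * Lg" using Lg by (intro mult_left_mono sqrt_le_self) auto
      also have "\<dots> \<le> (2 * La) * (2 * La)" using Lg by (intro mult_mono) auto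
      finally show ?thesis by (simp add: power2_eq_square)
    qed
    have ld: "(ln dd)^3 \<le> 216 * sqrt dd" by (rule lnd_cube[OF dd])
    have ld0: "0 \<le> (ln dd)^3" using dd by simp
    have "21^3 * (ln dd)^3 * p^3 * l3^3 * (sqrt Lg)^3 \<le> 21^3 * (216 * sqrt dd) * p^3 * La * (4 * La^2)"
      using ld ld0 sL l3 p Lg La dd by (intro mult_mono mult_right_mono mult_left_mono) auto
    moreover have "(sqrt dd)^3 = dd * sqrt dd" using dd by (simp add: power3_eq_cube)
    moreover have "0 \<le> C^3 * (dd * sqrt dd)" using Cp dd by simp
    ultimately show ?thesis by (metis divide_right_mono)
  qed
  also have "\<dots> = 21^3 * 864 * p^3 * La^3 / (C^3 * dd)"
    using sdd by (simp add: power2_eq_square power3_eq_cube field_simps)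
  finally have B2c: "B2^3 \<le> 21^3 * 864 * p^3 * La^3 / (C^3 * dd)" .
  have mB2: "mm * p * B2^3 \<le> 21^3 * 864 / C^2"
  proof -
    have ddp: "0 < dd" using dd by simp
    have "mm * p * B2^3 \<le> mm * p * (21^3 * 864 * p^3 * La^3 / (C^3 * dd))"
      using B2c mm p by (intro mult_left_mono) auto
    also have "\<dots> \<le> mm * p * (21^3 * 864 * p^3 * La^3 / (C^3 * (C * mm^2 * p^2 * n^2 * La^4)))"
    proof -
      have q: "0 < C * mm^2 * p^2 * n^2 * La^4" using mm p La Cp n by simp
      have "21^3 * 864 * p^3 * La^3 / (C^3 * dd) \<le> 21^3 * 864 * p^3 * La^3 / (C^3 * (C * mm^2 * p^2 * n^2 * La^4))"
        using ddb q Cp p La by (intro divide_left_mono mult_left_mono) auto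
      then show ?thesis using mm p by (intro mult_left_mono) auto
    qed
    also have "\<dots> = 21^3 * 864 * p^2 / (C^4 * mm * n^2 * La)"
    proof -
      have "\<And>K. mm * p * (K * p^3 * La^3 / (C^3 * (C * mm^2 * p^2 * n^2 * La^4))) = K * p^2 / (C^4 * mm * n^2 * La)"
        using mm p La Cp n by (simp add: field_simps eval_nat_numeral)
      from this[of "21^3 * 864"] show ?thesis by simp
    qed
    also have "\<dots> \<le> 21^3 * 864 * C^2 / (C^4 * 1)"
    proof (intro divide_mono mult_left_mono)
      show "p^2 \<le> C^2" using p by (intro power_mono) auto
      have "1 \<le> mm * n^2 * La" using mm n La
      proof -
        have "1 \<le> n^2" using n by simp
        then have "1 * 1 * 1 \<le> mm * n^2 * La" using mm La by (intro mult_mono) auto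
        then show ?thesis by simp
      qed
      then show "C^4 * 1 \<le> C^4 * mm * n^2 * La" using Cp by (simp add: mult.assoc)
    qed (use Cp in auto)
    also have "\<dots> = 21^3 * 864 / C^2" proof -
      have c4: "C^4 = C^2 * C^2" by (simp add: power_add[symmetric])
      have "21^3 * 864 * C^2 / (C^4 * 1) = 21^3 * 864 * C^2 / (C^2 * C^2)" by (simp only: c4 mult_1_right)
      also have "\<dots> = 21^3 * 864 / C^2"
      proof -
        have g: "\<And>c K. 0 < c \<Longrightarrow> K * c / (c * c) = K / (c::real)" by (simp add: field_simps)
        show ?thesis by (rule g) (use Cp in simp)
      qed
      finally show ?thesis .
    qed
    finally show ?thesis .
  qed
  have "mm * p * (B1 + B2)^3 \<le> mm * p * (4 * (B1^3 + B2^3))"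
    using cube_sum_le[OF B1p B2p] mm p by (intro mult_left_mono) auto
  also have "\<dots> = 4 * (mm * p * B1^3) + 4 * (mm * p * B2^3)" by (simp add: algebra_simps)
  also have "\<dots> \<le> 4 * (27 / C^3) + 4 * (21^3 * 864 / C^2)" using mB1 mB2 by simp
  also have "\<dots> \<le> 4 * (27 / 1000000^3) + 4 * (21^3 * 864 / 1000000^2)"
    using C by (intro add_mono mult_left_mono divide_left_mono power_mono) auto
  also have "\<dots> \<le> 1/4" by simp
  finally show "mm * p * (3 * s0 * sn * sqrt (dd * Lq) + 21 * pun * n * p * l3 / sqrt dd * sqrt Lg)^3 \<le> 1/4"
    unfolding B1_def B2_def .
qed

lemma powr_third_cube: "0 \<le> x \<Longrightarrow> (x powr (1/3))^3 = (x::real)"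
proof -
  assume x: "0 \<le> x"
  show ?thesis
  proof (cases "x = 0")
    case True then show ?thesis by simp
  next
    case False
    then have "(x powr (1/3))^3 = x powr (1/3) * x powr (1/3) * x powr (1/3)" by (simp add: power3_eq_cube)
    also have "\<dots> = x powr (1/3 + 1/3 + 1/3)" by (simp only: powr_add)
    also have "\<dots> = x" using x False by simp
    finally show ?thesis .
  qed
qed

lemma powr_twothird_cube: "0 \<le> x \<Longrightarrow> (x powr (2/3))^3 = (x::real)^2"
proof -
  assume x: "0 \<le> x"
  show ?thesis
  proof (cases "x = 0")
    case True then show ?thesis by simp
  next
    case False
    then have "(x powr (2/3))^3 = x powr (2/3) * x powr (2/3) * x powr (2/3)" by (simp add: power3_eq_cube)
    also have "\<dots> = x powr (2/3 + 2/3 + 2/3)" by (simp only: powr_add)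
    also have "\<dots> = x powr (1 + 1)" by simp
    also have "\<dots> = x powr 1 * x powr 1" by (simp only: powr_add)
    also have "\<dots> = x^2" using x False by (simp add: power2_eq_square)
    finally show ?thesis .
  qed
qed

lemma ln_ge1: "3 \<le> (x::real) \<Longrightarrow> 1 \<le> ln x"
  by (subst ln_ge_iff) (use exp_le in auto)

lemma min3_le:
  fixes x C a b c L :: real
  assumes "x \<le> inverse C * min a (min b c) / L" "0 < C" "0 < L"
  shows "x \<le> inverse C * a / L" "x \<le> inverse C * b / L" "x \<le> inverse C * c / L"
proof -
  have ic: "0 \<le> inverse C" using assms(2) by simp
  have "inverse C * min a (min b c) / L \<le> inverse C * a / L"
    using ic assms(3) by (intro divide_right_mono mult_left_mono) auto
  then show "x \<le> inverse C * a / L" using assms(1) by linarith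
  have "inverse C * min a (min b c) / L \<le> inverse C * b / L"
    using ic assms(3) by (intro divide_right_mono mult_left_mono) auto
  then show "x \<le> inverse C * b / L" using assms(1) by linarith
  have "inverse C * min a (min b c) / L \<le> inverse C * c / L"
    using ic assms(3) by (intro divide_right_mono mult_left_mono) auto
  then show "x \<le> inverse C * c / L" using assms(1) by linarith
qed



lemma le_div_delta: "0 \<le> (z::real) \<Longrightarrow> 0 < delta \<Longrightarrow> delta < 1 \<Longrightarrow> z \<le> z / delta"
  by (simp add: le_divide_eq mult_left_le)

lemma main_lemma:
  fixes N P d m :: nat and alpha sn s0 eta eps Gam delta :: real and T t :: nat
    and SL SU :: "nat set" and y :: "nat \<Rightarrow> real" and s :: "nat \<Rightarrow> nat"
    and X :: "nat \<Rightarrow> nat \<Rightarrow> nat \<Rightarrow> real" and Xadv :: "nat \<Rightarrow> nat \<Rightarrow> nat \<Rightarrow> nat \<Rightarrow> real"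
    and W :: "nat \<Rightarrow> nat \<Rightarrow> nat \<Rightarrow> real"
  assumes SC: "standing_conds 1000000 N P d m alpha sn s0 eta eps Gam delta T (real (card SU) / real N)"
    and DS: "data_support N P d alpha SL SU y s X"
    and EE: "event_E N P d m sn s0 delta y s X (W 0)"
    and ADV: "\<forall>\<tau> i. i \<in> {1..N} \<longrightarrow> is_adv m P d eps (W \<tau>) (y i) (X i) (s i) (Xadv \<tau> i)"
    and TS: "\<forall>\<tau>. W (Suc \<tau>) = train_step N m P d eta y (Xadv \<tau>) (W \<tau>)"
    and tT: "t \<le> T"
    and NB: "\<forall>\<tau>\<le>t. \<forall>r\<in>{1..m}. \<forall>i\<in>SL. \<forall>j\<in>{1..P}. j \<noteq> s i \<longrightarrow>
        \<bar>ip d (W \<tau> r) (X i j)\<bar> \<le> 3 * s0 * sn * sqrt (d * ln (16 * N * m * P / delta))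
          + 21 * (real (card SU) / real N) * N * P * (ln T) powr (1/3) / sqrt d
            * sqrt (ln (16 * N^2 * P^2 / delta))"
  shows "\<forall>r\<in>{1..m}. W t r 1 \<le> 3 * (ln T) powr (1/3) / alpha"
proof -
  define C :: real where "C = 1000000"
  define pun where "pun = real (card SU) / real N"
  define La where "La = ln (real T * real N * real m * real P / delta)"
  define Lb where "Lb = ln (real T * real d * real N * real m * real P / delta)"
  have SC': "standing_conds C N P d m alpha sn s0 eta eps Gam delta T pun" using SC unfolding C_def pun_def .
  note SCu = SC'[unfolded standing_conds_def]
  have pos: "0 < alpha" "0 < sn" "0 < s0" "0 < eta" "0 < eps" "0 < delta" "delta < 1"
    using SCu by auto
  have Cge: "1000000 \<le> C" and Cp: "0 < C" unfolding C_def by auto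
  have h1: "C * real N / (eta * s0 * sn ^ 3 * real d powr (3 / 2)) \<le> real T" using SCu by blast
  have h2: "C * (real m)^2 * (real P)^2 * (real N)^2 * La ^ 4 \<le> real d" using SCu unfolding La_def by blast
  have h4: "s0 \<le> inverse C * min (1 / (real m powr (2/3) * real P powr (2/3) * sn * sqrt (real d)))
                (min (1 / (alpha * real m powr (2/3))) (1 / (sn * (real m)^2 * sqrt (real P) * real d))) / Lb"
    using SCu unfolding Lb_def by blast
  have h5: "eta \<le> inverse C * min (1 / (alpha ^ 3 * s0)) (min (1 / (sn^2 * real d)) (1 / alpha^2)) / La"
    using SCu unfolding La_def by (simp add: of_nat_mult)
  have h6: "eps < inverse C * min alpha (1 / (real m * s0 * real d))" using SCu by blast
  have h7: "pun = 0 \<or> (C / real N \<le> pun \<and> pun \<le> inverse C * ln (real d) / real N)" using SCu by blast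
  have h8: "real P \<le> C" "2 \<le> P" using SCu by auto
  have minnn: "0 \<le> min (1 / (real m powr (2/3) * real P powr (2/3) * sn * sqrt (real d)))
                (min (1 / (alpha * real m powr (2/3))) (1 / (sn * (real m)^2 * sqrt (real P) * real d)))"
    using pos by simp
  have Lbp: "0 < Lb"
  proof (rule ccontr)
    assume "\<not> 0 < Lb"
    then have "inverse C * min (1 / (real m powr (2/3) * real P powr (2/3) * sn * sqrt (real d)))
                (min (1 / (alpha * real m powr (2/3))) (1 / (sn * (real m)^2 * sqrt (real P) * real d))) / Lb \<le> 0"
      using minnn Cp by (intro divide_nonneg_nonpos) auto
    then show False using h4 pos by linarith
  qed
  have prod_nz: "real T * real d * real N * real m * real P \<noteq> 0"
  proof
    assume z: "real T * real d * real N * real m * real P = 0"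
    have "Lb = 0" unfolding Lb_def z by (simp only: div_0 ln_0)
    then show False using Lbp by simp
  qed
  then have T1: "1 \<le> T" and d1: "1 \<le> d" and N1: "1 \<le> N" and m1: "1 \<le> m" and P1: "1 \<le> P"
    by (auto simp: Suc_le_eq)
  have rT: "1 \<le> real T" and rd: "1 \<le> real d" and rN: "1 \<le> real N" and rm: "1 \<le> real m"
    and rP: "2 \<le> real P" using T1 d1 N1 m1 h8 by auto
  define xa where "xa = real T * real N * real m * real P / delta"
  define xb where "xb = real T * real d * real N * real m * real P / delta"
  have TNm: "1 \<le> real T * real N * real m"
  proof -
    have "1 * 1 * 1 \<le> real T * real N * real m" using rT rN rm by (intro mult_mono) auto
    then show ?thesis by simp
  qed
  have xa2: "2 \<le> xa"
  proof -
    have "1 * 2 \<le> (real T * real N * real m) * real P" using TNm rP by (intro mult_mono) auto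
    also have "\<dots> \<le> (real T * real N * real m) * real P / delta" using pos TNm rP
      by (intro le_div_delta) auto
    finally show ?thesis unfolding xa_def by simp
  qed
  have xab: "xa \<le> xb"
  proof -
    have "real T * real N * real m * real P * 1 \<le> real T * real N * real m * real P * real d"
      using rd TNm rP by (intro mult_left_mono) auto
    then show ?thesis unfolding xa_def xb_def using pos by (simp add: divide_right_mono mult_ac)
  qed
  have La_half: "1/2 \<le> La"
  proof -
    have "ln 2 \<le> ln xa" using xa2 by simp
    then show ?thesis using ln2_half unfolding La_def xa_def by linarith
  qed
  have LaLb: "La \<le> Lb" unfolding La_def Lb_def using xab xa2 xa_def xb_def by simp
  have dpow: "real d powr (3/2) = real d * sqrt (real d)"
  proof -
    have "real d powr (3/2) = real d powr (1 + 1/2)" by simp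
    also have "\<dots> = real d * real d powr (1/2)" using rd by (simp only: powr_add) simp
    also have "\<dots> = real d * sqrt (real d)" using rd by (simp add: powr_half_sqrt)
    finally show ?thesis .
  qed
  have Lap: "0 < La" using La_half by simp
  have e2: "eta \<le> inverse C * (1 / (sn^2 * real d)) / La"
    by (rule min3_le(2)[OF h5 Cp Lap])
  have s3: "s0 \<le> inverse C * (1 / (sn * (real m)^2 * sqrt (real P) * real d)) / Lb"
    by (rule min3_le(3)[OF h4 Cp Lbp])
  have h1': "C * real N / (eta * s0 * sn^3 * (real d * sqrt (real d))) \<le> real T" using h1 unfolding dpow .
  have C1: "1 \<le> C" and rP1: "1 \<le> real P" using Cge rP by auto
  have TC: "C^3 / 4 \<le> real T"
    by (rule NL_T[OF C1 rN rm rP1 rd pos(4) pos(3) pos(2) La_half LaLb h1' e2 s3])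
  have T16: "16 \<le> real T"
  proof -
    have "(100::real)^3 \<le> C^3" using Cge by (intro power_mono) auto
    then show ?thesis using TC by simp
  qed
  define L where "L = ln (real T)"
  define l3 where "l3 = L powr (1/3)"
  have L1: "1 \<le> L" unfolding L_def using T16 by (intro ln_ge1) simp
  have l3c: "l3^3 = L" unfolding l3_def using L1 by (intro powr_third_cube) simp
  have l31: "1 \<le> l3" unfolding l3_def using L1 by (simp add: ge_one_powr_ge_zero)
  have l3L: "l3 \<le> L"
  proof -
    have "L powr (1/3) \<le> L powr 1" using L1 by (intro powr_mono) auto
    then show ?thesis unfolding l3_def using L1 by simp
  qed
  have dNP: "1 \<le> real d * real N * real P"
  proof -
    have "1 * 1 * 1 \<le> real d * real N * real P" using rd rN rP by (intro mult_mono) auto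
    then show ?thesis by simp
  qed
  have NmP: "1 \<le> real N * real m * real P"
  proof -
    have "1 * 1 * 1 \<le> real N * real m * real P" using rm rN rP by (intro mult_mono) auto
    then show ?thesis by simp
  qed
  have LLa: "L \<le> La"
  proof -
    have "real T * 1 \<le> real T * (real N * real m * real P)" using NmP rT by (intro mult_left_mono) auto
    also have "\<dots> \<le> real T * (real N * real m * real P) / delta" using pos NmP rT by (intro le_div_delta) auto
    finally have "real T \<le> xa" unfolding xa_def by (simp add: mult_ac)
    then show ?thesis unfolding L_def La_def xa_def[symmetric] using rT by simp
  qed
  have La1: "1 \<le> La" using L1 LLa by simp
  define Lm where "Lm = ln (16 * real m / delta)"
  define Lq where "Lq = ln (16 * real N * real m * real P / delta)"
  define Lg where "Lg = ln (16 * (real N)^2 * (real P)^2 / delta)"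
  have Lm1: "1 \<le> Lm"
  proof -
    have "16 * 1 \<le> 16 * real m" using rm by simp
    also have "\<dots> \<le> 16 * real m / delta" using pos rm by (intro le_div_delta) auto
    finally show ?thesis unfolding Lm_def by (intro ln_ge1) simp
  qed
  have LmLb: "Lm \<le> Lb"
  proof -
    have "16 * real m * 1 \<le> real T * real m * (real d * real N * real P)"
      using T16 rm dNP by (intro mult_mono) auto
    then have "16 * real m \<le> real T * real d * real N * real m * real P" by (simp add: mult_ac)
    then have "16 * real m / delta \<le> xb" unfolding xb_def using pos by (intro divide_right_mono) auto
    moreover have "0 < 16 * real m / delta" using rm pos by simp
    ultimately show ?thesis unfolding Lm_def Lb_def xb_def[symmetric] by (rule ln_mono)
  qed
  have Lq0: "0 \<le> Lq"
  proof -
    have "1 \<le> 16 * (real N * real m * real P)" using NmP by simp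
    also have "\<dots> \<le> 16 * (real N * real m * real P) / delta" using pos NmP by (intro le_div_delta) auto
    finally show ?thesis unfolding Lq_def by (simp add: mult_ac)
  qed
  have LqLb: "Lq \<le> Lb"
  proof -
    have "16 * (real N * real m * real P) \<le> real T * (real d * (real N * real m * real P))"
    proof (rule mult_mono)
      show "real N * real m * real P \<le> real d * (real N * real m * real P)"
        using mult_right_mono[OF rd, of "real N * real m * real P"] NmP by simp
    qed (use T16 NmP in auto)
    then have "16 * real N * real m * real P / delta \<le> xb" unfolding xb_def using pos
      by (intro divide_right_mono) (auto simp: mult_ac)
    moreover have "0 < 16 * real N * real m * real P / delta" using pos rN rm rP by simp
    ultimately show ?thesis unfolding Lq_def Lb_def xb_def[symmetric] by (rule ln_mono)
  qed
  have Lg1: "1 \<le> Lg"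
  proof -
    have "16 * 1 * 1 \<le> 16 * (real N)^2 * (real P)^2" using rN rP by (intro mult_mono) auto
    also have "\<dots> \<le> 16 * (real N)^2 * (real P)^2 / delta" using pos by (intro le_div_delta) auto
    finally show ?thesis unfolding Lg_def by (intro ln_ge1) simp
  qed
  have LgLa: "Lg \<le> 2 * La"
  proof -
    have "16 \<le> (real T)^2" using power_mono[OF T16, of 2] by simp
    moreover have "1 \<le> (real m)^2" using rm by simp
    ultimately have "16 * 1 \<le> (real T)^2 * (real m)^2" by (intro mult_mono) auto
    then have a: "16 * ((real N)^2 * (real P)^2) \<le> (real T)^2 * (real m)^2 * ((real N)^2 * (real P)^2)"
      using rN rP by (intro mult_right_mono) auto
    have b: "1 / delta \<le> 1 / delta^2" using pos by (simp add: power2_eq_square divide_simps mult_left_le)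
    have "16 * (real N)^2 * (real P)^2 / delta = (16 * ((real N)^2 * (real P)^2)) * (1 / delta)" by simp
    also have "\<dots> \<le> ((real T)^2 * (real m)^2 * ((real N)^2 * (real P)^2)) * (1 / delta^2)"
      by (rule mult_mono[OF a b]) (use pos in auto)
    also have "\<dots> = xa^2" unfolding xa_def by (simp add: power_divide power_mult_distrib mult_ac)
    finally have "16 * (real N)^2 * (real P)^2 / delta \<le> xa^2" .
    moreover have "0 < 16 * (real N)^2 * (real P)^2 / delta" using pos rN rP by simp
    ultimately have "Lg \<le> ln (xa^2)" unfolding Lg_def by (rule ln_mono)
    also have "ln (xa^2) = 2 * ln xa" using xa2 by (simp add: ln_realpow)
    finally show ?thesis unfolding La_def xa_def .
  qed
  have d2: "2 \<le> d"
  proof -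
    have "C * 1 * 1 * 1 * 1 \<le> C * (real m)^2 * (real P)^2 * (real N)^2 * La^4"
      using Cp rm rP rN La1 by (intro mult_mono) auto
    then have "C \<le> real d" using h2 by simp
    then show ?thesis using Cge by simp
  qed
  have eps5: "eps \<le> alpha / 5"
  proof -
    have "inverse C * min alpha (1 / (real m * s0 * real d)) \<le> inverse C * alpha"
      using Cp by (intro mult_left_mono) auto
    also have "\<dots> \<le> alpha / 5" using Cge pos by (simp add: field_simps)
    finally show ?thesis using h6 by simp
  qed
  have pun0: "0 \<le> pun * real N" unfolding pun_def by simp
  have punN: "pun * real N \<le> ln (real d) / C"
    using h7
  proof
    assume "pun = 0" then show ?thesis using rd Cp by simp
  next
    assume "C / real N \<le> pun \<and> pun \<le> inverse C * ln (real d) / real N"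
    then have "pun * real N \<le> inverse C * ln (real d) / real N * real N" using rN by (intro mult_right_mono) auto
    then show ?thesis using rN by (simp add: field_simps)
  qed
  define mp where "mp = real m powr (2/3)"
  define pp where "pp = real P powr (2/3)"
  have mp: "1 \<le> mp" "mp^3 = (real m)^2" unfolding mp_def using rm
    by (auto simp: ge_one_powr_ge_zero powr_twothird_cube)
  have pp: "1 \<le> pp" "pp^3 = (real P)^2" unfolding pp_def using rP
    by (auto simp: ge_one_powr_ge_zero powr_twothird_cube)
  have s0a: "s0 \<le> inverse C * (1 / (mp * pp * sn * sqrt (real d))) / Lb"
    using min3_le(1)[OF h4 Cp Lbp] unfolding mp_def pp_def .
  have s0b: "s0 \<le> inverse C * (1 / (alpha * mp)) / Lb"
    using min3_le(2)[OF h4 Cp Lbp] unfolding mp_def .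
  have e3: "eta \<le> inverse C * (1 / alpha^2) / La" by (rule min3_le(3)[OF h5 Cp Lap])
  define \<iota> where "\<iota> = s0 * sqrt (2 * Lm)"
  have C8: "8 \<le> C" using Cge by simp
  have io: "\<iota> \<le> (l3 / alpha) / 2" "real m * ((6/5*alpha)^3 * \<iota>^3) \<le> 1/4" "0 \<le> \<iota>"
    unfolding \<iota>_def using NL_iota[OF C8 pos(1) rm mp pos(3) Lm1 LmLb l31 s0b] by auto
  have eta108: "108 * eta * alpha^2 * l3 \<le> 1"
    by (rule NL_eta[where La=La]) (use Cge pos l31 l3L LLa e3 in auto)
  define B where "B = 3 * s0 * sn * sqrt (real d * Lq) + 21 * pun * real N * real P * l3 / sqrt (real d) * sqrt Lg"
  have rP1: "1 \<le> real P" using rP by simp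
  have noiseB: "real m * real P * B^3 \<le> 1/4" "0 \<le> B"
    unfolding B_def
    by (rule NL_noise[OF Cge pos(3) pos(2) rd Lq0 LqLb _ mp pp rm rP1 h8(1) rN s0a pun0 punN Lg1 LgLa La1 _ _ h2];
        use Lbp LaLb La1 l31 l3c LLa in auto)+
  note DSu = DS[unfolded data_support_def]
  have SLU: "SL \<union> SU = {1..N}" "SL \<inter> SU = {}" using DSu by auto
  have yy: "y i = 1 \<or> y i = -1" and si: "s i \<in> {1..P}"
    and sigX: "\<And>j. j \<in> {1..d} \<Longrightarrow> X i (s i) j = alpha * y i * (if i \<in> SL then evec 1 j else evec d j)"
    and nzX: "\<And>p. p \<in> {1..P} \<Longrightarrow> p \<noteq> s i \<Longrightarrow> X i p 1 = 0"
    if "i \<in> {1..N}" for i using DSu that by auto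
  have feas: "adv_feasible P d eps (X i) (s i) (Xadv \<tau> i)" if "i \<in> {1..N}" for i \<tau>
    using ADV that unfolding is_adv_def by blast
  have d1': "1 \<le> d" using d2 by simp
  define aa where "aa = (\<lambda>\<tau> i. SOME a. 4/5*alpha \<le> a \<and> a \<le> 6/5*alpha \<and> (\<forall>j\<in>{1..d}. Xadv \<tau> i (s i) j = (a * y i) * evec 1 j))"
  have aaP: "4/5*alpha \<le> aa \<tau> i \<and> aa \<tau> i \<le> 6/5*alpha \<and> (\<forall>j\<in>{1..d}. Xadv \<tau> i (s i) j = (aa \<tau> i * y i) * evec 1 j)"
    if i: "i \<in> SL" for \<tau> i
  proof -
    have iN: "i \<in> {1..N}" using i SLU by auto
    have "\<exists>a. 4/5*alpha \<le> a \<and> a \<le> 6/5*alpha \<and> (\<forall>j\<in>{1..d}. Xadv \<tau> i (s i) j = (a * y i) * evec 1 j)"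
      by (rule sampleSL[OF d2 si[OF iN] yy[OF iN] pos(1) _ feas[OF iN] eps5]) (use sigX[OF iN] i in simp)
    then show ?thesis unfolding aa_def by (rule someI_ex)
  qed
  have Xn: "Xadv \<tau> i p j = X i p j" if "i \<in> {1..N}" "p \<in> {1..P}" "p \<noteq> s i" "j \<in> {1..d}" for \<tau> i p j
    by (rule sample_noise[OF that(2,3,4) feas[OF that(1)]])
  have Xn1: "Xadv \<tau> i p 1 = 0" if "i \<in> {1..N}" "p \<in> {1..P}" "p \<noteq> s i" for \<tau> i p
    using Xn[OF that, of 1] nzX[OF that] d1' by simp
  have XSU: "Xadv \<tau> i (s i) 1 = 0" if "i \<in> SU" for \<tau> i
  proof -
    have iN: "i \<in> {1..N}" using that SLU by auto
    have nSL: "i \<notin> SL" using that SLU by auto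
    show ?thesis by (rule sampleSU[where \<alpha>=alpha and y="y i", OF d2 si[OF iN] _ feas[OF iN]]) (use sigX[OF iN] nSL in simp)
  qed
  define z where "z = (\<lambda>\<tau> i. y i * fW m P d (W \<tau>) (Xadv \<tau> i))"
  have der: "deriv (\<lambda>zz. logloss (y i * fW m P d ((W \<tau>)(r := (W \<tau> r)(1 := zz))) (Xadv \<tau> i))) (W \<tau> r 1)
      = (if i \<in> SL then - (sig (z \<tau> i) * (3 * aa \<tau> i^3 * (W \<tau> r 1)^2)) else 0)"
    if r: "r \<in> {1..m}" and i: "i \<in> {1..N}" for \<tau> r i
  proof (cases "i \<in> SL")
    case True
    have y2: "(y i)^2 = 1" using yy[OF i] by auto
    have D: "deriv (\<lambda>zz. logloss (y i * fW m P d ((W \<tau>)(r := (W \<tau> r)(1 := zz))) (Xadv \<tau> i))) (W \<tau> r 1)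
       = - sig (y i * fW m P d (W \<tau>) (Xadv \<tau> i)) * (3 * (aa \<tau> i * y i)^3 * y i * (W \<tau> r 1)^2)"
      by (rule deriv_term[OF d1' r si[OF i] _ _ y2]) (use Xn1[OF i] aaP[OF True] in auto)
    have E: "3 * (aa \<tau> i * y i)^3 * y i * (W \<tau> r 1)^2 = 3 * aa \<tau> i^3 * (W \<tau> r 1)^2"
      using yy[OF i] by auto
    show ?thesis using True unfolding z_def D E by simp
  next
    case False
    then have iU: "i \<in> SU" using i SLU by auto
    have "deriv (\<lambda>zz. logloss (y i * fW m P d ((W \<tau>)(r := (W \<tau> r)(1 := zz))) (Xadv \<tau> i))) (W \<tau> r 1) = 0"
      by (rule deriv_zero[OF d1' r P1]) (use Xn1[OF i] XSU[OF iU] in auto)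
    then show ?thesis using False by simp
  qed
  have step: "W (Suc \<tau>) r 1 = W \<tau> r 1 + eta / real N *
      (\<Sum>i=1..N. if i \<in> SL then sig (z \<tau> i) * (3 * aa \<tau> i^3 * (W \<tau> r 1)^2) else 0)"
    if r: "r \<in> {1..m}" for \<tau> r
  proof -
    have "W (Suc \<tau>) r 1 = W \<tau> r 1 - eta / real N * (\<Sum>i=1..N.
          deriv (\<lambda>zz. logloss (y i * fW m P d ((W \<tau>)(r := (W \<tau> r)(1 := zz))) (Xadv \<tau> i))) (W \<tau> r 1))"
      using TS d2 by (simp add: train_step_def)
    also have "(\<Sum>i=1..N. deriv (\<lambda>zz. logloss (y i * fW m P d ((W \<tau>)(r := (W \<tau> r)(1 := zz))) (Xadv \<tau> i))) (W \<tau> r 1))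
       = (\<Sum>i=1..N. - (if i \<in> SL then sig (z \<tau> i) * (3 * aa \<tau> i^3 * (W \<tau> r 1)^2) else 0))"
    proof (rule sum.cong[OF refl])
      fix i assume i: "i \<in> {1..N}"
      show "deriv (\<lambda>zz. logloss (y i * fW m P d ((W \<tau>)(r := (W \<tau> r)(1 := zz))) (Xadv \<tau> i))) (W \<tau> r 1)
        = - (if i \<in> SL then sig (z \<tau> i) * (3 * aa \<tau> i^3 * (W \<tau> r 1)^2) else 0)"
        unfolding der[OF r i] by simp
    qed
    also have "\<dots> = - (\<Sum>i=1..N. if i \<in> SL then sig (z \<tau> i) * (3 * aa \<tau> i^3 * (W \<tau> r 1)^2) else 0)"
      by (rule sum_negf)
    finally show ?thesis by simp
  qed
  have zb: "z \<tau> i \<ge> (\<Sum>r\<in>{1..m}. aa \<tau> i^3 * (W \<tau> r 1)^3) - 1/4" if tl: "\<tau> < t" and iSL: "i \<in> SL" for \<tau> i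
  proof -
    have iN: "i \<in> {1..N}" using iSL SLU by auto
    show ?thesis unfolding z_def
    proof (rule zlemma[OF d1' si[OF iN] yy[OF iN] _ _ noiseB(2)])
      show "Xadv \<tau> i (s i) j = aa \<tau> i * y i * evec 1 j" if "j \<in> {1..d}" for j
        using aaP[OF iSL] that by auto
      show "real m * real P * B^3 \<le> 1/4" by (rule noiseB(1))
      fix r p assume rp: "r \<in> {1..m}" "p \<in> {1..P}" "p \<noteq> s i"
      have "ip d (W \<tau> r) (Xadv \<tau> i p) = ip d (W \<tau> r) (X i p)"
        by (rule ip_cong) (rule Xn[OF iN rp(2,3)])
      moreover have "\<bar>ip d (W \<tau> r) (X i p)\<bar> \<le> B"
        using NB tl iSL rp unfolding B_def Lq_def pun_def l3_def L_def Lg_def by auto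
      ultimately show "\<bar>ip d (W \<tau> r) (Xadv \<tau> i p)\<bar> \<le> B" by simp
    qed
  qed
  have Np: "0 < N" using N1 by simp
  have init: "\<bar>W 0 r 1\<bar> \<le> \<iota>" if r: "r \<in> {1..m}" for r
  proof -
    have e: "ip d (W 0 r) (evec 1) = W 0 r 1 * 1" by (rule ip_evec1[OF d1']) simp
    have "\<bar>ip d (W 0 r) (evec 1)\<bar> \<le> s0 * sqrt (2 * ln (16 * real m / delta))"
      using EE r unfolding event_E_def by blast
    then show ?thesis unfolding e \<iota>_def Lm_def by simp
  qed
  have res: "\<forall>r\<in>{1..m}. W t r 1 \<le> 3 * (l3 / alpha)"
  proof (rule dyn[where w="\<lambda>\<tau> r. W \<tau> r 1" and a=aa and z=z and \<iota>=\<iota> and lc=l3 and A="l3 / alpha" and T=T, OF Np])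
    show "\<And>\<tau> r. \<tau> < t \<Longrightarrow> r \<in> {1..m} \<Longrightarrow> W (Suc \<tau>) r 1 = W \<tau> r 1 + eta / real N *
      (\<Sum>i=1..N. if i \<in> SL then sig (z \<tau> i) * (3 * aa \<tau> i^3 * (W \<tau> r 1)^2) else 0)"
      using step by blast
    show "\<And>\<tau> i. \<tau> < t \<Longrightarrow> i \<in> SL \<Longrightarrow> 4/5*alpha \<le> aa \<tau> i \<and> aa \<tau> i \<le> 6/5*alpha"
      using aaP by blast
    show "\<And>\<tau> i. \<tau> < t \<Longrightarrow> i \<in> SL \<Longrightarrow> z \<tau> i \<ge> (\<Sum>r\<in>{1..m}. aa \<tau> i^3 * (W \<tau> r 1)^3) - 1/4"
      by (rule zb)
    show "\<And>r. r \<in> {1..m} \<Longrightarrow> \<bar>W 0 r 1\<bar> \<le> \<iota>" by (rule init)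
    show "real m * ((6/5*alpha)^3 * \<iota>^3) \<le> 1/4" "\<iota> \<le> (l3 / alpha)/2" "0 \<le> \<iota>" using io by auto
    show "l3 / alpha = l3 / alpha" "l3^3 = ln (real T)" "1 \<le> l3" "0 < alpha"
      using l3c l31 pos unfolding L_def by auto
    show "0 \<le> eta" "108 * eta * alpha^2 * l3 \<le> 1" using pos eta108 by auto
    show "t \<le> T" "1 \<le> T" using tT T1 by auto
  qed
  then show ?thesis unfolding l3_def L_def by simp
qed

theorem lemmaF6:
  shows "\<exists>C>0. \<forall>(N::nat) (P::nat) (d::nat) (m::nat) (alpha::real) (sn::real) (s0::real) (eta::real)
      (eps::real) (Gam::real) (delta::real) (T::nat) (SL::nat set) (SU::nat set)
      (y::nat \<Rightarrow> real) (s::nat \<Rightarrow> nat) (X::nat \<Rightarrow> nat \<Rightarrow> nat \<Rightarrow> real)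
      (Xadv::nat \<Rightarrow> nat \<Rightarrow> nat \<Rightarrow> nat \<Rightarrow> real) (W::nat \<Rightarrow> nat \<Rightarrow> nat \<Rightarrow> real) (t::nat).
    standing_conds C N P d m alpha sn s0 eta eps Gam delta T (real (card SU) / real N) \<and>
    data_support N P d alpha SL SU y s X \<and>
    (\<forall>r\<in>{1..m}. W 0 r d = 0) \<and>
    event_E N P d m sn s0 delta y s X (W 0) \<and>
    (\<forall>\<tau> i. i \<in> {1..N} \<longrightarrow> is_adv m P d eps (W \<tau>) (y i) (X i) (s i) (Xadv \<tau> i)) \<and>
    (\<forall>\<tau>. W (Suc \<tau>) = train_step N m P d eta y (Xadv \<tau>) (W \<tau>)) \<and>
    t \<le> T \<and>
    (\<forall>\<tau>\<le>t. \<forall>r\<in>{1..m}. \<forall>i\<in>SL. \<forall>j\<in>{1..P}. j \<noteq> s i \<longrightarrow>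
        \<bar>ip d (W \<tau> r) (X i j)\<bar> \<le> 3 * s0 * sn * sqrt (d * ln (16 * N * m * P / delta))
          + 21 * (real (card SU) / real N) * N * P * (ln T) powr (1/3) / sqrt d
            * sqrt (ln (16 * N^2 * P^2 / delta)))
    \<longrightarrow> (\<forall>r\<in>{1..m}. W t r 1 \<le> 3 * (ln T) powr (1/3) / alpha)"
  apply (rule exI[where x="1000000::real"])
  apply (intro conjI allI impI)
   apply simp
  apply (elim conjE)
  apply (rule main_lemma; assumption)
  done

end
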